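(* Every unit of $A(n,d,\underline{q})$ is of the form $\gamma h_1^{m_1}\cdots h_n^{m_n}$ with $\gamma\in\Bbbk^*$ and $m_1,\ldots,m_n\in\mathbb{Z}$.
   Context: Let $\Bbbk$ be a field, $n,d$ positive integers, and $\underline{q}=(q_1,\ldots,q_n)\in(\Bbbk^* )^n$ with $q_i^d\neq1$ for all $i$. Write $a_d(X)=X^d-1$. The algebra $A(n,d,\underline{q})$ is the $\Bbbk$-algebra generated by $x_i,y_i,h_i,h_i^{-1}$ ($1\le i\le n$) subject to the relations $h_ih_i^{-1}=h_i^{-1}h_i=1$, $x_ih_i=q_ih_ix_i$, $y_ih_i=q_i^{-1}h_iy_i$, $x_iy_i=a_d(q_ih_i)=(q_ih_i)^d-1$, $y_ix_i=a_d(h_i)=h_i^d-1$, and, for $i\neq j$, each of $h_i^{\pm1},x_i,y_i$ commutes with each of $h_j^{\pm1},x_j,y_j$. (Equivalently, it is the tensor product over $\Bbbk$ of the generalized Weyl algebras $\Bbbk[h_i^{\pm1}](\sigma_i,h_i^d-1)$ with $\sigma_i(h_i)=q_ih_i$.) *)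

theory Defs
  imports Main
begin

text \<open>The algebra A(n,d,q) is given by generators and relations. We model it as the
free associative algebra on the generators x_i, y_i, h_i, h_i^{-1} (1 <= i <= n),
i.e. finitely supported coefficient functions on words, modulo the two-sided ideal
generated by the defining relations.\<close>

datatype gen = Xg nat | Yg nat | Hg nat | Hig nat

fun gidx :: "gen \<Rightarrow> nat" where
  "gidx (Xg i) = i" | "gidx (Yg i) = i" | "gidx (Hg i) = i" | "gidx (Hig i) = i"

type_synonym 'k ncp = "gen list \<Rightarrow> 'k"

definition ncadd :: "'k::field ncp \<Rightarrow> 'k ncp \<Rightarrow> 'k ncp" where
  "ncadd p r = (\<lambda>w. p w + r w)"

definition ncsub :: "'k::field ncp \<Rightarrow> 'k ncp \<Rightarrow> 'k ncp" where
  "ncsub p r = (\<lambda>w. p w - r w)"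

definition ncsmul :: "'k::field \<Rightarrow> 'k ncp \<Rightarrow> 'k ncp" where
  "ncsmul c p = (\<lambda>w. c * p w)"

definition ncmul :: "'k::field ncp \<Rightarrow> 'k ncp \<Rightarrow> 'k ncp" where
  "ncmul p r = (\<lambda>w. \<Sum>k\<le>length w. p (take k w) * r (drop k w))"

definition ncone :: "'k::field ncp" where
  "ncone = (\<lambda>w. if w = [] then 1 else 0)"

definition nczero :: "'k::field ncp" where
  "nczero = (\<lambda>w. 0)"

definition ncvar :: "gen \<Rightarrow> 'k::field ncp" where
  "ncvar g = (\<lambda>w. if w = [g] then 1 else 0)"

fun ncpow :: "'k::field ncp \<Rightarrow> nat \<Rightarrow> 'k ncp" where
  "ncpow p 0 = ncone"
| "ncpow p (Suc k) = ncmul (ncpow p k) p"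

definition ncelem :: "nat \<Rightarrow> 'k::field ncp \<Rightarrow> bool" where
  "ncelem n p \<longleftrightarrow> finite {w. p w \<noteq> 0} \<and>
     (\<forall>w. p w \<noteq> 0 \<longrightarrow> (\<forall>g\<in>set w. gidx g \<in> {1..n}))"

definition gens_of :: "nat \<Rightarrow> gen set" where
  "gens_of i = {Xg i, Yg i, Hg i, Hig i}"

definition relators :: "nat \<Rightarrow> nat \<Rightarrow> (nat \<Rightarrow> 'k::field) \<Rightarrow> 'k ncp set" where
  "relators n d q =
    (\<Union>i\<in>{1..n}.
      { ncsub (ncmul (ncvar (Hg i)) (ncvar (Hig i))) ncone,
        ncsub (ncmul (ncvar (Hig i)) (ncvar (Hg i))) ncone,
        ncsub (ncmul (ncvar (Xg i)) (ncvar (Hg i)))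
              (ncsmul (q i) (ncmul (ncvar (Hg i)) (ncvar (Xg i)))),
        ncsub (ncmul (ncvar (Yg i)) (ncvar (Hg i)))
              (ncsmul (inverse (q i)) (ncmul (ncvar (Hg i)) (ncvar (Yg i)))),
        ncsub (ncmul (ncvar (Xg i)) (ncvar (Yg i)))
              (ncsub (ncpow (ncsmul (q i) (ncvar (Hg i))) d) ncone),
        ncsub (ncmul (ncvar (Yg i)) (ncvar (Xg i)))
              (ncsub (ncpow (ncvar (Hg i)) d) ncone) })
    \<union> {ncsub (ncmul (ncvar g) (ncvar g')) (ncmul (ncvar g') (ncvar g)) | g g' i j.
         i \<in> {1..n} \<and> j \<in> {1..n} \<and> i \<noteq> j \<and> g \<in> gens_of i \<and> g' \<in> gens_of j}"

inductive_set relideal :: "nat \<Rightarrow> nat \<Rightarrow> (nat \<Rightarrow> 'k::field) \<Rightarrow> 'k ncp set"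
  for n d q where
  zero: "nczero \<in> relideal n d q"
| gen: "\<lbrakk> ncelem n a; ncelem n b; r \<in> relators n d q \<rbrakk>
          \<Longrightarrow> ncmul (ncmul a r) b \<in> relideal n d q"
| add: "\<lbrakk> p \<in> relideal n d q; r \<in> relideal n d q \<rbrakk> \<Longrightarrow> ncadd p r \<in> relideal n d q"

definition Aeq :: "nat \<Rightarrow> nat \<Rightarrow> (nat \<Rightarrow> 'k::field) \<Rightarrow> 'k ncp \<Rightarrow> 'k ncp \<Rightarrow> bool" where
  "Aeq n d q p r \<longleftrightarrow> ncsub p r \<in> relideal n d q"

definition Aunit :: "nat \<Rightarrow> nat \<Rightarrow> (nat \<Rightarrow> 'k::field) \<Rightarrow> 'k ncp \<Rightarrow> bool" where
  "Aunit n d q u \<longleftrightarrow> ncelem n u \<and>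
     (\<exists>v. ncelem n v \<and> Aeq n d q (ncmul u v) ncone \<and> Aeq n d q (ncmul v u) ncone)"

definition hpow :: "nat \<Rightarrow> int \<Rightarrow> 'k::field ncp" where
  "hpow i m = (if 0 \<le> m then ncpow (ncvar (Hg i)) (nat m) else ncpow (ncvar (Hig i)) (nat (- m)))"

fun hmono :: "(nat \<Rightarrow> int) \<Rightarrow> nat \<Rightarrow> 'k::field ncp" where
  "hmono m 0 = ncone"
| "hmono m (Suc k) = ncmul (hmono m k) (hpow (Suc k) (m (Suc k)))"

end

theory Submission
  imports Defs "HOL-Library.Function_Algebras"
begin

definition W :: "gen list \<Rightarrow> 'k::field ncp" where
  "W u = (\<lambda>w. if w = u then 1 else 0)"

definition supp :: "('a \<Rightarrow> 'k::zero) \<Rightarrow> 'a set" where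
  "supp f = {x. f x \<noteq> 0}"

definition sm :: "'k::field \<Rightarrow> ('a \<Rightarrow> 'k) \<Rightarrow> ('a \<Rightarrow> 'k)" where
  "sm c f = (\<lambda>x. c * f x)"

lemma sum_fun_apply: "(sum F S) x = (\<Sum>i\<in>S. F i x)"
  by (induction S rule: infinite_finite_induct) auto

lemma ncadd_eq: "ncadd p r = p + r" by (simp add: ncadd_def fun_eq_iff)
lemma ncsub_eq: "ncsub p r = p - r" by (simp add: ncsub_def fun_eq_iff)
lemma ncsmul_eq: "ncsmul c p = sm c p" by (simp add: ncsmul_def sm_def)
lemma nczero_eq: "nczero = 0" by (simp add: nczero_def fun_eq_iff)
lemma ncone_eq: "ncone = W []" by (simp add: ncone_def W_def fun_eq_iff)
lemma ncvar_eq: "ncvar g = W [g]" by (simp add: ncvar_def W_def fun_eq_iff)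

lemma sm_apply[simp]: "sm c f x = c * f x" by (simp add: sm_def)
lemma sm_add: "sm c (f + g) = sm c f + sm c g" by (simp add: sm_def fun_eq_iff algebra_simps)
lemma sm_diff: "sm c (f - g) = sm c f - sm c g" by (simp add: sm_def fun_eq_iff algebra_simps)
lemma sm_sm: "sm c (sm c' f) = sm (c*c') f" by (simp add: sm_def fun_eq_iff algebra_simps)
lemma sm_0[simp]: "sm c 0 = 0" "sm 0 f = 0" "sm 1 f = f" by (auto simp: sm_def fun_eq_iff)
lemma sm_sum: "sm c (sum F S) = (\<Sum>i\<in>S. sm c (F i))"
  by (simp add: sm_def fun_eq_iff sum_fun_apply sum_distrib_left)
lemma sm_addc: "sm (c + c') f = sm c f + sm c' f" by (simp add: sm_def fun_eq_iff algebra_simps)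
lemma sm_minus: "sm (-1) f = - f" by (simp add: sm_def fun_eq_iff)

lemma ncmul_add_left: "ncmul (p + p') r = ncmul p r + ncmul p' r"
  by (simp add: ncmul_def fun_eq_iff sum.distrib algebra_simps)
lemma ncmul_add_right: "ncmul p (r + r') = ncmul p r + ncmul p r'"
  by (simp add: ncmul_def fun_eq_iff sum.distrib algebra_simps)
lemma ncmul_diff_left: "ncmul (p - p') r = ncmul p r - ncmul p' r"
  by (simp add: ncmul_def fun_eq_iff sum_subtractf algebra_simps)
lemma ncmul_diff_right: "ncmul p (r - r') = ncmul p r - ncmul p r'"
  by (simp add: ncmul_def fun_eq_iff sum_subtractf algebra_simps)
lemma ncmul_sm_left: "ncmul (sm c p) r = sm c (ncmul p r)"
  by (simp add: ncmul_def fun_eq_iff sum_distrib_left algebra_simps)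
lemma ncmul_sm_right: "ncmul p (sm c r) = sm c (ncmul p r)"
  by (simp add: ncmul_def fun_eq_iff sum_distrib_left algebra_simps)
lemma ncmul_0[simp]: "ncmul 0 r = 0" "ncmul p 0 = 0"
  by (simp_all add: ncmul_def fun_eq_iff)
lemma ncmul_sum_left: "ncmul (sum F S) r = (\<Sum>i\<in>S. ncmul (F i) r)"
proof (induction S rule: infinite_finite_induct)
  case (insert x A)
  then show ?case by (simp only: sum.insert[OF insert(1,2)] ncmul_add_left insert(3))
qed (simp_all add: ncmul_def)
lemma ncmul_sum_right: "ncmul p (sum F S) = (\<Sum>i\<in>S. ncmul p (F i))"
proof (induction S rule: infinite_finite_induct)
  case (insert x A)
  then show ?case by (simp only: sum.insert[OF insert(1,2)] ncmul_add_right insert(3))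
qed (simp_all add: ncmul_def)

lemma ncmul_W: "ncmul (W u) (W v) = (W (u @ v) :: 'k::field ncp)"
proof -
  have "ncmul (W u) (W v) w = (W (u @ v) w :: 'k)" for w
  proof -
    have "ncmul (W u) (W v) w = (\<Sum>k\<le>length w. (if k = length u \<and> w = u @ v then 1 else (0::'k)))"
      unfolding ncmul_def W_def
      apply (rule sum.cong, simp)
      by (auto simp: min_def)
    then show ?thesis by (auto simp: W_def)
  qed
  then show ?thesis by auto
qed

lemma expand: "finite (supp p) \<Longrightarrow> p = (\<Sum>u\<in>supp p. sm (p u) (W u))"
proof (rule ext)
  fix w assume fin: "finite (supp p)"
  have "(\<Sum>u\<in>supp p. sm (p u) (W u)) w = (\<Sum>u\<in>supp p. if w = u then p u else 0)"
    unfolding sum_fun_apply by (rule sum.cong) (auto simp: W_def)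
  also have "\<dots> = p w" using fin by (simp add: sum.delta supp_def)
  finally show "p w = (\<Sum>u\<in>supp p. sm (p u) (W u)) w" by simp
qed

lemma assoc_sums:
  "ncmul (ncmul (\<Sum>u\<in>A. sm (a u) (W u)) (\<Sum>v\<in>B. sm (b v) (W v))) (\<Sum>z\<in>C. sm (c z) (W z))
 = ncmul (\<Sum>u\<in>A. sm (a u) (W u)) (ncmul (\<Sum>v\<in>B. sm (b v) (W v)) (\<Sum>z\<in>C. sm (c z) (W z)))"
  by (simp add: ncmul_sum_left ncmul_sum_right ncmul_sm_left ncmul_sm_right ncmul_W sm_sum)

lemma ncmul_assoc:
  assumes "finite (supp p)" "finite (supp r)" "finite (supp s)"
  shows "ncmul (ncmul p r) s = ncmul p (ncmul r s)"
proof -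
  note ep = expand[OF assms(1)] and er = expand[OF assms(2)] and es = expand[OF assms(3)]
  show ?thesis using assoc_sums[of p "supp p" r "supp r" s "supp s"]
    by (simp only: ep[symmetric] er[symmetric] es[symmetric])
qed

lemmas fapp = sm_apply plus_fun_apply zero_fun_apply minus_apply uminus_apply
declare sm_apply[simp del] plus_fun_apply[simp del] zero_fun_apply[simp del] minus_apply[simp del]
  uminus_apply[simp del]


definition vw :: "nat \<Rightarrow> gen list \<Rightarrow> bool" where
  "vw n w \<longleftrightarrow> (\<forall>g\<in>set w. gidx g \<in> {1..n})"

lemma vw_simps[simp]: "vw n []" "vw n (g # w) \<longleftrightarrow> gidx g \<in> {1..n} \<and> vw n w"
  "vw n (u @ v) \<longleftrightarrow> vw n u \<and> vw n v"
  by (auto simp: vw_def)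

lemma vw_replicate[simp]: "vw n (replicate k g) \<longleftrightarrow> k = 0 \<or> gidx g \<in> {1..n}"
  by (auto simp: vw_def)

lemma vw_concat[simp]: "vw n (concat ws) \<longleftrightarrow> (\<forall>w\<in>set ws. vw n w)"
  by (auto simp: vw_def)

lemma ncelem_iff: "ncelem n p \<longleftrightarrow> finite (supp p) \<and> (\<forall>w\<in>supp p. vw n w)"
  by (auto simp: ncelem_def supp_def vw_def)

lemma ncelem_fin: "ncelem n p \<Longrightarrow> finite (supp p)"
  by (simp add: ncelem_iff)

lemma supp_W: "supp (W u :: 'k::field ncp) = {u}"
  by (auto simp: supp_def W_def)

lemma ncelem_W: "vw n u \<Longrightarrow> ncelem n (W u :: 'k::field ncp)"
  by (simp add: ncelem_iff supp_W)

lemma ncelem_0: "ncelem n (0 :: 'k::field ncp)"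
  by (simp add: ncelem_iff supp_def fapp)

lemma ncelem_add: "ncelem n p \<Longrightarrow> ncelem n r \<Longrightarrow> ncelem n (p + r :: 'k::field ncp)"
proof -
  assume a: "ncelem n p" "ncelem n r"
  have "supp (p + r) \<subseteq> supp p \<union> supp r" by (auto simp: supp_def fapp)
  with a show ?thesis unfolding ncelem_iff by (meson UnE finite_UnI finite_subset subsetD)
qed

lemma ncelem_sm: "ncelem n p \<Longrightarrow> ncelem n (sm c p :: 'k::field ncp)"
proof -
  assume a: "ncelem n p"
  have "supp (sm c p) \<subseteq> supp p" by (auto simp: supp_def fapp)
  with a show ?thesis unfolding ncelem_iff by (meson finite_subset subsetD)
qed

lemma ncelem_diff: "ncelem n p \<Longrightarrow> ncelem n r \<Longrightarrow> ncelem n (p - r :: 'k::field ncp)"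
proof -
  assume a: "ncelem n p" "ncelem n r"
  have "p - r = p + sm (-1) r" by (simp add: fun_eq_iff fapp)
  then show ?thesis using a ncelem_add ncelem_sm by metis
qed

lemma ncelem_sum: "(\<And>i. i \<in> S \<Longrightarrow> ncelem n (F i)) \<Longrightarrow> ncelem n (sum F S :: 'k::field ncp)"
proof (induction S rule: infinite_finite_induct)
  case (insert x A)
  have "ncelem n (F x)" "ncelem n (sum F A)" using insert by auto
  then show ?case by (simp only: sum.insert[OF insert(1,2)]) (rule ncelem_add)
qed (simp_all only: sum.infinite sum.empty ncelem_0 not_False_eq_True)

lemma ncmul_nz:
  assumes "ncmul p r w \<noteq> 0"
  shows "\<exists>k\<le>length w. p (take k w) \<noteq> 0 \<and> r (drop k w) \<noteq> 0"
proof (rule ccontr)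
  assume "\<not> ?thesis"
  then have "ncmul p r w = 0" unfolding ncmul_def by (intro sum.neutral) auto
  with assms show False by simp
qed

lemma ncelem_mul:
  assumes "ncelem n p" "ncelem n r"
  shows "ncelem n (ncmul p r :: 'k::field ncp)"
proof -
  have sub: "supp (ncmul p r) \<subseteq> (\<lambda>(u,v). u @ v) ` (supp p \<times> supp r)"
  proof
    fix w assume "w \<in> supp (ncmul p r)"
    then obtain k where "p (take k w) \<noteq> 0" "r (drop k w) \<noteq> 0"
      using ncmul_nz unfolding supp_def by blast
    then show "w \<in> (\<lambda>(u,v). u @ v) ` (supp p \<times> supp r)"
      unfolding supp_def by (intro image_eqI[of _ _ "(take k w, drop k w)"]) auto
  qed
  have "finite (supp (ncmul p r))"
    using assms by (intro finite_subset[OF sub]) (auto simp: ncelem_iff)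
  moreover have "\<forall>w\<in>supp (ncmul p r). vw n w"
    using sub assms by (auto simp: ncelem_iff)
  ultimately show ?thesis by (simp add: ncelem_iff)
qed

lemma ncpow_ncelem: "ncelem n p \<Longrightarrow> ncelem n (ncpow p k :: 'k::field ncp)"
  by (induction k) (auto simp: ncone_eq ncelem_W ncelem_mul)

lemma ncpow_smW: "ncpow (sm c (W [g])) k = sm (c ^ k) (W (replicate k g) :: 'k::field ncp)"
proof (induction k)
  case 0 then show ?case by (simp add: ncone_eq)
next
  case (Suc k)
  have "ncpow (sm c (W [g])) (Suc k) = ncmul (sm (c ^ k) (W (replicate k g))) (sm c (W [g]))"
    using Suc by simp
  also have "\<dots> = sm (c * c ^ k) (W (replicate k g @ [g]))"
    by (simp only: ncmul_sm_left ncmul_sm_right ncmul_W sm_sm)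
  also have "\<dots> = sm (c ^ Suc k) (W (replicate (Suc k) g))"
    by (simp only: replicate_append_same replicate_Suc power_Suc)
  finally show ?case .
qed

lemma relator_ncelem:
  assumes "r \<in> relators n d q"
  shows "ncelem n (r :: 'k::field ncp)"
  using assms unfolding relators_def gens_of_def
  by (auto simp: ncsub_eq ncsmul_eq ncvar_eq ncone_eq intro!: ncelem_diff ncelem_mul ncelem_sm ncelem_W
      ncpow_ncelem)

lemma ideal_fin: "p \<in> relideal n d q \<Longrightarrow> ncelem n p"
proof (induction rule: relideal.induct)
  case zero then show ?case by (simp add: nczero_eq ncelem_0)
next
  case (gen a b r) then show ?case
    by (intro ncelem_mul) (auto intro: relator_ncelem)
next
  case (add p r) then show ?case by (simp add: ncadd_eq ncelem_add)
qed

lemma ideal_mult: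
  assumes "p \<in> relideal n d q" "ncelem n a" "ncelem n b"
  shows "ncmul (ncmul a p) b \<in> relideal n d q"
  using assms
proof (induction arbitrary: a b rule: relideal.induct)
  case zero then show ?case using relideal.zero[simplified nczero_eq] by (simp only: nczero_eq ncmul_0)
next
  case (gen a' b' r a b)
  have f: "finite (supp a)" "finite (supp b)" "finite (supp a')" "finite (supp b')" "finite (supp r)"
    using gen relator_ncelem ncelem_fin by blast+
  have fm: "finite (supp (ncmul a' r))" "finite (supp (ncmul (ncmul a a') r))"
    using gen relator_ncelem by (auto intro!: ncelem_fin ncelem_mul)
  have "ncmul (ncmul a (ncmul (ncmul a' r) b')) b = ncmul (ncmul (ncmul a (ncmul a' r)) b') b"
    using ncmul_assoc[OF f(1) fm(1) f(4)] by simp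
  also have "\<dots> = ncmul (ncmul (ncmul (ncmul a a') r) b') b"
    using ncmul_assoc[OF f(1) f(3) f(5)] by simp
  also have "\<dots> = ncmul (ncmul (ncmul a a') r) (ncmul b' b)"
    using ncmul_assoc[OF fm(2) f(4) f(2)] by simp
  finally show ?case using gen by (auto intro!: relideal.gen ncelem_mul)
next
  case (add p r a b)
  then show ?case by (simp add: ncadd_eq ncmul_add_left ncmul_add_right relideal.add[simplified ncadd_eq])
qed

lemma ideal_0: "0 \<in> relideal n d q"
  using relideal.zero[simplified nczero_eq] .

lemma ideal_add: "p \<in> relideal n d q \<Longrightarrow> r \<in> relideal n d q \<Longrightarrow> p + r \<in> relideal n d q"
  using relideal.add[simplified ncadd_eq] .


lemma ideal_sm: "p \<in> relideal n d q \<Longrightarrow> sm c p \<in> relideal n d q"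
proof (induction rule: relideal.induct)
  case zero then show ?case by (simp only: nczero_eq sm_0 ideal_0)
next
  case (gen a b r)
  then have "ncmul (ncmul (sm c a) r) b \<in> relideal n d q"
    by (intro relideal.gen ncelem_sm)
  then show ?case by (simp add: ncmul_sm_left)
next
  case (add p r) then show ?case by (simp add: ncadd_eq sm_add ideal_add)
qed

lemma ideal_diff: "p \<in> relideal n d q \<Longrightarrow> r \<in> relideal n d q \<Longrightarrow> p - r \<in> relideal n d q"
proof -
  assume a: "p \<in> relideal n d q" "r \<in> relideal n d q"
  have "p - r = p + sm (-1) r" by (simp add: fun_eq_iff fapp)
  then show ?thesis using a ideal_add ideal_sm by metis
qed

lemma ideal_sum: "(\<And>i. i \<in> S \<Longrightarrow> F i \<in> relideal n d q) \<Longrightarrow> sum F S \<in> relideal n d q"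
proof (induction S rule: infinite_finite_induct)
  case (insert x A)
  have "F x \<in> relideal n d q" "sum F A \<in> relideal n d q" using insert by auto
  then show ?case by (simp only: sum.insert[OF insert(1,2)]) (rule ideal_add)
qed (simp_all only: sum.infinite sum.empty ideal_0 not_False_eq_True)

lemma Aeq_iff: "Aeq n d q p r \<longleftrightarrow> p - r \<in> relideal n d q"
  by (simp add: Aeq_def ncsub_eq)

lemma Aeq_refl: "Aeq n d q p p"
  by (simp add: Aeq_iff ideal_0)

lemma Aeq_sym: "Aeq n d q p r \<Longrightarrow> Aeq n d q r p"
proof -
  assume "Aeq n d q p r"
  then have "sm (-1) (p - r) \<in> relideal n d q" by (simp add: Aeq_iff ideal_sm)
  moreover have "sm (-1) (p - r) = r - p" by (simp add: fun_eq_iff fapp)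
  ultimately show ?thesis by (simp add: Aeq_iff)
qed

lemma Aeq_trans[trans]: "Aeq n d q p r \<Longrightarrow> Aeq n d q r s \<Longrightarrow> Aeq n d q p s"
proof -
  assume "Aeq n d q p r" "Aeq n d q r s"
  then have "(p - r) + (r - s) \<in> relideal n d q" unfolding Aeq_iff by (rule ideal_add)
  moreover have "(p - r) + (r - s) = p - s" by (simp add: fun_eq_iff fapp)
  ultimately show ?thesis by (simp add: Aeq_iff)
qed

lemma Aeq_add: "Aeq n d q p r \<Longrightarrow> Aeq n d q p' r' \<Longrightarrow> Aeq n d q (p + p') (r + r')"
proof -
  assume "Aeq n d q p r" "Aeq n d q p' r'"
  then have "(p - r) + (p' - r') \<in> relideal n d q" unfolding Aeq_iff by (rule ideal_add)
  moreover have "(p - r) + (p' - r') = (p + p') - (r + r')" by (simp add: fun_eq_iff fapp)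
  ultimately show ?thesis by (simp add: Aeq_iff)
qed

lemma Aeq_diff: "Aeq n d q p r \<Longrightarrow> Aeq n d q p' r' \<Longrightarrow> Aeq n d q (p - p') (r - r')"
proof -
  assume "Aeq n d q p r" "Aeq n d q p' r'"
  then have "(p - r) - (p' - r') \<in> relideal n d q" unfolding Aeq_iff by (rule ideal_diff)
  moreover have "(p - r) - (p' - r') = (p - p') - (r - r')" by (simp add: fun_eq_iff fapp)
  ultimately show ?thesis by (simp add: Aeq_iff)
qed

lemma Aeq_sm: "Aeq n d q p r \<Longrightarrow> Aeq n d q (sm c p) (sm c r)"
  by (simp add: Aeq_iff sm_diff[symmetric] ideal_sm)

lemma Aeq_mult:
  assumes "Aeq n d q p r" "ncelem n a" "ncelem n b"
  shows "Aeq n d q (ncmul (ncmul a p) b) (ncmul (ncmul a r) b)"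
  using ideal_mult[OF assms[unfolded Aeq_iff]]
  by (simp add: Aeq_iff ncmul_diff_left ncmul_diff_right)

lemma Aeq_sum: "(\<And>i. i \<in> S \<Longrightarrow> Aeq n d q (F i) (G i)) \<Longrightarrow> Aeq n d q (sum F S) (sum G S)"
proof -
  assume "\<And>i. i \<in> S \<Longrightarrow> Aeq n d q (F i) (G i)"
  then have "(\<Sum>i\<in>S. F i - G i) \<in> relideal n d q" by (simp add: Aeq_iff ideal_sum)
  then show ?thesis by (simp add: Aeq_iff sum_subtractf)
qed

lemma Aeq_eq_trans[trans]: "Aeq n d q p r \<Longrightarrow> r = s \<Longrightarrow> Aeq n d q p s" by simp
lemma eq_Aeq_trans[trans]: "p = r \<Longrightarrow> Aeq n d q r s \<Longrightarrow> Aeq n d q p s" by simp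

definition ctx :: "gen list \<Rightarrow> gen list \<Rightarrow> 'k::field ncp \<Rightarrow> 'k ncp" where
  "ctx a b X = ncmul (ncmul (W a) X) (W b)"

lemma ncmul_Wnil_left: "ncmul (W []) r = r"
proof (rule ext)
  fix w
  have "ncmul (W []) r w = (\<Sum>k\<le>length w. if k = 0 then r w else 0)"
    unfolding ncmul_def W_def by (rule sum.cong) auto
  then show "ncmul (W []) r w = r w" by simp
qed

lemma ncmul_Wnil_right: "ncmul r (W []) = r"
proof (rule ext)
  fix w
  have "ncmul r (W []) w = (\<Sum>k\<le>length w. if k = length w then r w else 0)"
    unfolding ncmul_def W_def by (rule sum.cong) auto
  then show "ncmul r (W []) w = r w" by simp
qed

lemma ctx_W: "ctx a b (W u) = W (a @ u @ b)"
  by (simp add: ctx_def ncmul_W)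
lemma ctx_add: "ctx a b (X + Y) = ctx a b X + ctx a b Y"
  by (simp add: ctx_def ncmul_add_left ncmul_add_right)
lemma ctx_diff: "ctx a b (X - Y) = ctx a b X - ctx a b Y"
  by (simp add: ctx_def ncmul_diff_left ncmul_diff_right)
lemma ctx_sm: "ctx a b (sm c X) = sm c (ctx a b X)"
  by (simp add: ctx_def ncmul_sm_left ncmul_sm_right)
lemma ctx_0: "ctx a b 0 = 0"
  by (simp add: ctx_def)
lemmas ctx_simps = ctx_W ctx_add ctx_diff ctx_sm ctx_0

lemma Aeq_ctx: "Aeq n d q X Y \<Longrightarrow> vw n a \<Longrightarrow> vw n b \<Longrightarrow> Aeq n d q (ctx a b X) (ctx a b Y)"
  unfolding ctx_def by (intro Aeq_mult ncelem_W)

lemma relator_Aeq: "r \<in> relators n d q \<Longrightarrow> Aeq n d q r 0"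
proof -
  assume r: "r \<in> relators n d q"
  have "ncmul (ncmul (W []) r) (W []) \<in> relideal n d q"
    by (rule relideal.gen) (auto intro: ncelem_W r)
  moreover have "ncmul (ncmul (W []) r) (W []) = r"
    by (simp only: ncmul_Wnil_left ncmul_Wnil_right)
  ultimately show ?thesis by (simp add: Aeq_iff)
qed


lemma gens_of_gidx: "g \<in> gens_of (gidx g)"
  by (cases g) (auto simp: gens_of_def)

definition hw :: "nat \<Rightarrow> int \<Rightarrow> gen list" where
  "hw i m = (if 0 \<le> m then replicate (nat m) (Hg i) else replicate (nat (-m)) (Hig i))"
definition zw :: "nat \<Rightarrow> int \<Rightarrow> gen list" where
  "zw i k = (if 0 \<le> k then replicate (nat k) (Xg i) else replicate (nat (-k)) (Yg i))"
definition blk :: "nat \<Rightarrow> int \<Rightarrow> int \<Rightarrow> gen list" where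
  "blk i m k = hw i m @ zw i k"

lemma gidx_hw: "g \<in> set (hw i m) \<Longrightarrow> gidx g = i"
  by (auto simp: hw_def split: if_splits)
lemma gidx_zw: "g \<in> set (zw i m) \<Longrightarrow> gidx g = i"
  by (auto simp: zw_def split: if_splits)
lemma gidx_blk: "g \<in> set (blk i m k) \<Longrightarrow> gidx g = i"
  by (auto simp: blk_def dest: gidx_hw gidx_zw)

lemma vw_hw[simp]: "i \<in> {1..n} \<Longrightarrow> vw n (hw i m)"
  by (auto simp: vw_def dest: gidx_hw)
lemma vw_zw[simp]: "i \<in> {1..n} \<Longrightarrow> vw n (zw i m)"
  by (auto simp: vw_def dest: gidx_zw)
lemma vw_blk[simp]: "i \<in> {1..n} \<Longrightarrow> vw n (blk i m k)"
  by (auto simp: vw_def dest: gidx_blk)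

locale GW =
  fixes n d :: nat and q :: "nat \<Rightarrow> 'k::field"
  assumes dpos: "0 < d" and qnz: "\<And>i. i \<in> {1..n} \<Longrightarrow> q i \<noteq> 0"
begin

abbreviation E :: "'k ncp \<Rightarrow> 'k ncp \<Rightarrow> bool" (infix "\<approx>" 50) where
  "p \<approx> r \<equiv> Aeq n d q p r"

lemma rel_to: "ncsub A B \<in> relators n d q \<Longrightarrow> A \<approx> B"
proof -
  assume "ncsub A B \<in> relators n d q"
  then have "A - B \<approx> 0" using relator_Aeq by (simp add: ncsub_eq)
  then show "A \<approx> B" by (simp add: Aeq_iff)
qed

lemma lift: "A \<approx> B \<Longrightarrow> vw n a \<Longrightarrow> vw n b \<Longrightarrow> ctx a b A \<approx> ctx a b B"
  by (rule Aeq_ctx)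

context
  fixes i assumes i: "i \<in> {1..n}"
begin

lemma rel1: "W [Hg i, Hig i] \<approx> W []"
  using i by (intro rel_to) (auto simp: relators_def ncvar_eq ncone_eq ncmul_W)
lemma rel2: "W [Hig i, Hg i] \<approx> W []"
  using i by (intro rel_to) (auto simp: relators_def ncvar_eq ncone_eq ncmul_W)
lemma rel3: "W [Xg i, Hg i] \<approx> sm (q i) (W [Hg i, Xg i])"
  using i by (intro rel_to) (auto simp: relators_def ncvar_eq ncone_eq ncmul_W ncsmul_eq)
lemma rel4: "W [Yg i, Hg i] \<approx> sm (inverse (q i)) (W [Hg i, Yg i])"
  using i by (intro rel_to) (auto simp: relators_def ncvar_eq ncone_eq ncmul_W ncsmul_eq)
lemma rel5: "W [Xg i, Yg i] \<approx> sm (q i ^ d) (W (replicate d (Hg i))) - W []"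
proof -
  have "ncsub (ncmul (ncvar (Xg i)) (ncvar (Yg i)))
              (ncsub (ncpow (ncsmul (q i) (ncvar (Hg i))) d) ncone) \<in> relators n d q"
    using i by (auto simp: relators_def)
  then show ?thesis by (intro rel_to) (simp add: ncvar_eq ncone_eq ncmul_W ncsmul_eq ncsub_eq ncpow_smW)
qed
lemma rel6: "W [Yg i, Xg i] \<approx> W (replicate d (Hg i)) - W []"
proof -
  have "ncsub (ncmul (ncvar (Yg i)) (ncvar (Xg i)))
              (ncsub (ncpow (ncvar (Hg i)) d) ncone) \<in> relators n d q"
    using i by (auto simp: relators_def)
  moreover have "ncpow (ncvar (Hg i)) d = (W (replicate d (Hg i)) :: 'k ncp)"
    using ncpow_smW[of 1 "Hg i" d] by (simp add: ncvar_eq)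
  ultimately show ?thesis by (intro rel_to) (simp add: ncvar_eq ncone_eq ncmul_W ncsub_eq)
qed

end

lemma rel7:
  assumes "gidx g \<in> {1..n}" "gidx g' \<in> {1..n}" "gidx g \<noteq> gidx g'"
  shows "W [g, g'] \<approx> W [g', g]"
proof (rule rel_to)
  have "ncsub (ncmul (ncvar g) (ncvar g')) (ncmul (ncvar g') (ncvar g)) \<in>
    {ncsub (ncmul (ncvar g) (ncvar g')) (ncmul (ncvar g') (ncvar g)) :: 'k ncp | g g' i j.
         i \<in> {1..n} \<and> j \<in> {1..n} \<and> i \<noteq> j \<and> g \<in> gens_of i \<and> g' \<in> gens_of j}"
    using assms gens_of_gidx[of g] gens_of_gidx[of g'] by blast
  then show "ncsub (W [g, g']) (W [g', g]) \<in> relators n d q"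
    unfolding relators_def by (simp add: ncvar_eq ncmul_W)
qed

lemma ctxrel:
  assumes "W u \<approx> B" "vw n a" "vw n b"
  shows "W (a @ u @ b) \<approx> ctx a b B"
  using lift[OF assms] by (simp add: ctx_W)

lemma commute1:
  assumes "gidx g \<in> {1..n}" "\<forall>g'\<in>set v. gidx g' \<in> {1..n} \<and> gidx g' \<noteq> gidx g" "vw n a" "vw n b"
  shows "W (a @ g # v @ b) \<approx> W (a @ v @ g # b)"
  using assms(2,3)
proof (induction v arbitrary: a)
  case Nil then show ?case by (simp add: Aeq_refl)
next
  case (Cons g' v a)
  have "W (a @ g # (g' # v) @ b) = W (a @ [g, g'] @ (v @ b))" by simp
  also have "\<dots> \<approx> ctx a (v @ b) (W [g', g])"
    using Cons assms by (intro ctxrel rel7) (auto simp: vw_def)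
  also have "\<dots> = W ((a @ [g']) @ g # v @ b)" by (simp add: ctx_W)
  also have "\<dots> \<approx> W ((a @ [g']) @ v @ g # b)"
    using Cons by (intro Cons.IH) auto
  finally show ?case by simp
qed

lemma Aeq_symI: "A \<approx> B \<Longrightarrow> B \<approx> A" by (rule Aeq_sym)

lemma sm_W_ctx: "ctx a b (sm c (W u) - W v) = sm c (W (a @ u @ b)) - W (a @ v @ b)"
  by (simp add: ctx_simps)

lemma rep_snoc: "replicate (Suc k) x = replicate k x @ [x]"
  by (simp add: replicate_append_same)

lemma cancelHHi:
  assumes i: "i \<in> {1..n}" and ab: "vw n a" "vw n b"
  shows "W (a @ replicate k (Hg i) @ replicate l (Hig i) @ b) \<approx>
         W (a @ replicate (k - l) (Hg i) @ replicate (l - k) (Hig i) @ b)"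
  using ab
proof (induction k arbitrary: l b)
  case 0 then show ?case by (simp add: Aeq_refl)
next
  case (Suc k l b)
  show ?case
  proof (cases l)
    case 0 then show ?thesis by (simp add: Aeq_refl)
  next
    case (Suc l')
    have "W (a @ replicate (Suc k) (Hg i) @ replicate l (Hig i) @ b)
        = W ((a @ replicate k (Hg i)) @ [Hg i, Hig i] @ (replicate l' (Hig i) @ b))"
      by (simp add: Suc replicate_app_Cons_same)
    also have "\<dots> \<approx> ctx (a @ replicate k (Hg i)) (replicate l' (Hig i) @ b) (W [])"
      using Suc.prems i by (intro ctxrel rel1) auto
    also have "\<dots> = W (a @ replicate k (Hg i) @ replicate l' (Hig i) @ b)"
      by (simp add: ctx_W)
    also have "\<dots> \<approx> W (a @ replicate (k - l') (Hg i) @ replicate (l' - k) (Hig i) @ b)"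
      using Suc.prems by (intro Suc.IH) auto
    finally show ?thesis by (simp add: Suc)
  qed
qed

lemma cancelHiH:
  assumes i: "i \<in> {1..n}" and ab: "vw n a" "vw n b"
  shows "W (a @ replicate k (Hig i) @ replicate l (Hg i) @ b) \<approx>
         W (a @ replicate (l - k) (Hg i) @ replicate (k - l) (Hig i) @ b)"
  using ab
proof (induction k arbitrary: l b)
  case 0 then show ?case by (simp add: Aeq_refl)
next
  case (Suc k l b)
  show ?case
  proof (cases l)
    case 0 then show ?thesis by (simp add: Aeq_refl)
  next
    case (Suc l')
    have "W (a @ replicate (Suc k) (Hig i) @ replicate l (Hg i) @ b)
        = W ((a @ replicate k (Hig i)) @ [Hig i, Hg i] @ (replicate l' (Hg i) @ b))"
      by (simp add: Suc replicate_app_Cons_same)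
    also have "\<dots> \<approx> ctx (a @ replicate k (Hig i)) (replicate l' (Hg i) @ b) (W [])"
      using Suc.prems i by (intro ctxrel rel2) auto
    also have "\<dots> = W (a @ replicate k (Hig i) @ replicate l' (Hg i) @ b)"
      by (simp add: ctx_W)
    also have "\<dots> \<approx> W (a @ replicate (l' - k) (Hg i) @ replicate (k - l') (Hig i) @ b)"
      using Suc.prems by (intro Suc.IH) auto
    finally show ?thesis by (simp add: Suc)
  qed
qed

lemma natfacts:
  fixes m m' :: int
  shows "0 \<le> m \<Longrightarrow> m' < 0 \<Longrightarrow> 0 \<le> m + m' \<Longrightarrow> nat m - nat (-m') = nat (m + m')"
    and "0 \<le> m \<Longrightarrow> m' < 0 \<Longrightarrow> 0 \<le> m + m' \<Longrightarrow> nat (-m') - nat m = 0"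
    and "0 \<le> m \<Longrightarrow> m' < 0 \<Longrightarrow> m + m' < 0 \<Longrightarrow> nat m - nat (-m') = 0"
    and "0 \<le> m \<Longrightarrow> m' < 0 \<Longrightarrow> m + m' < 0 \<Longrightarrow> nat (-m') - nat m = nat (- m - m')"
    and "0 \<le> m \<Longrightarrow> m' < 0 \<Longrightarrow> m + m' < 0 \<Longrightarrow> nat (-m') - nat m = nat (- m' - m)"
  by arith+

lemma hh:
  assumes i: "i \<in> {1..n}" and ab: "vw n a" "vw n b"
  shows "W (a @ hw i m @ hw i m' @ b) \<approx> W (a @ hw i (m + m') @ b)"
proof (cases "0 \<le> m")
  case True
  show ?thesis
  proof (cases "0 \<le> m'")
    case True
    with \<open>0 \<le> m\<close> show ?thesis
      by (simp add: hw_def replicate_add nat_add_distrib Aeq_refl)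
  next
    case False
    have "W (a @ hw i m @ hw i m' @ b) \<approx>
       W (a @ replicate (nat m - nat (-m')) (Hg i) @ replicate (nat (-m') - nat m) (Hig i) @ b)"
      using False \<open>0 \<le> m\<close> cancelHHi[OF i ab] by (simp add: hw_def)
    also have "\<dots> = W (a @ hw i (m + m') @ b)"
      using False \<open>0 \<le> m\<close> natfacts[of m m'] by (auto simp: hw_def)
    finally show ?thesis .
  qed
next
  case False
  show ?thesis
  proof (cases "0 \<le> m'")
    case True
    have "W (a @ hw i m @ hw i m' @ b) \<approx>
       W (a @ replicate (nat m' - nat (-m)) (Hg i) @ replicate (nat (-m) - nat m') (Hig i) @ b)"
      using False True cancelHiH[OF i ab] by (simp add: hw_def)
    also have "\<dots> = W (a @ hw i (m + m') @ b)"
      using False True natfacts[of m' m] by (auto simp: hw_def add.commute)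
    finally show ?thesis .
  next
    case False
    moreover have "nat (- m - m') = nat (-m) + nat (-m')" using False \<open>\<not> 0 \<le> m\<close> by arith
    ultimately show ?thesis using \<open>\<not> 0 \<le> m\<close>
      by (simp add: hw_def replicate_add Aeq_refl)
  qed
qed

lemma sm_Aeq_inv:
  assumes "A \<approx> sm r B" "r \<noteq> 0"
  shows "B \<approx> sm (inverse r) A"
proof -
  have "sm (inverse r) A \<approx> sm (inverse r) (sm r B)" using assms(1) by (rule Aeq_sm)
  also have "sm (inverse r) (sm r B) = B" using assms(2) by (simp add: sm_sm)
  finally show ?thesis by (rule Aeq_sym)
qed

lemma Zpast:
  assumes i: "i \<in> {1..n}" and Zi: "gidx Z = i" and rnz: "r \<noteq> 0"
    and hyp: "\<And>a b. vw n a \<Longrightarrow> vw n b \<Longrightarrow> W (a @ [Z, Hg i] @ b) \<approx> sm r (W (a @ [Hg i, Z] @ b))"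
    and ab: "vw n a" "vw n b"
  shows "W (a @ Z # hw i m @ b) \<approx> sm (r powi m) (W (a @ hw i m @ Z # b))"
proof -
  have vZ: "gidx Z \<in> {1..n}" using Zi i by simp
  have HZ: "W (a @ [Hg i, Z] @ b) \<approx> sm (inverse r) (W (a @ [Z, Hg i] @ b))"
    if "vw n a" "vw n b" for a b
    using sm_Aeq_inv[OF hyp[OF that] rnz] .
  have ZHi: "W (a @ [Z, Hig i] @ b) \<approx> sm (inverse r) (W (a @ [Hig i, Z] @ b))"
    if ab: "vw n a" "vw n b" for a b
  proof -
    have "W (a @ [Hig i, Hg i] @ ([Z, Hig i] @ b)) \<approx> ctx a ([Z, Hig i] @ b) (W [])"
      using ab i vZ by (intro ctxrel rel2) auto
    then have "W (a @ [Z, Hig i] @ b) \<approx> W (a @ [Hig i, Hg i] @ ([Z, Hig i] @ b))"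
      by (simp add: ctx_W Aeq_sym)
    also have "\<dots> = W ((a @ [Hig i]) @ [Hg i, Z] @ (Hig i # b))" by simp
    also have "\<dots> \<approx> sm (inverse r) (W ((a @ [Hig i]) @ [Z, Hg i] @ (Hig i # b)))"
      using ab i vZ by (intro HZ) auto
    also have "W ((a @ [Hig i]) @ [Z, Hg i] @ (Hig i # b)) = W ((a @ [Hig i, Z]) @ [Hg i, Hig i] @ b)"
      by simp
    also have "sm (inverse r) (W ((a @ [Hig i, Z]) @ [Hg i, Hig i] @ b)) \<approx> sm (inverse r) (W (a @ [Hig i, Z] @ b))"
    proof -
      have "W ((a @ [Hig i, Z]) @ [Hg i, Hig i] @ b) \<approx> ctx (a @ [Hig i, Z]) b (W [])"
        using ab i vZ by (intro ctxrel rel1) auto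
      then show ?thesis by (simp add: ctx_W Aeq_sm)
    qed
    finally show ?thesis .
  qed
  have powH: "W (a @ Z # replicate k (Hg i) @ b) \<approx> sm (r ^ k) (W (a @ replicate k (Hg i) @ Z # b))"
    if "vw n a" "vw n b" for a b k
    using that
  proof (induction k arbitrary: a)
    case 0 then show ?case by (simp add: Aeq_refl)
  next
    case (Suc k a)
    have "W (a @ Z # replicate (Suc k) (Hg i) @ b) = W (a @ [Z, Hg i] @ (replicate k (Hg i) @ b))" by simp
    also have "\<dots> \<approx> sm r (W (a @ [Hg i, Z] @ (replicate k (Hg i) @ b)))"
      using Suc.prems i by (intro hyp) auto
    also have "W (a @ [Hg i, Z] @ (replicate k (Hg i) @ b)) = W ((a @ [Hg i]) @ Z # replicate k (Hg i) @ b)"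
      by simp
    also have "sm r \<dots> \<approx> sm r (sm (r ^ k) (W ((a @ [Hg i]) @ replicate k (Hg i) @ Z # b)))"
      using Suc.prems i by (intro Aeq_sm Suc.IH) auto
    also have "\<dots> = sm (r ^ Suc k) (W (a @ replicate (Suc k) (Hg i) @ Z # b))"
      by (simp add: sm_sm)
    finally show ?case .
  qed
  have powHi: "W (a @ Z # replicate k (Hig i) @ b) \<approx> sm (inverse r ^ k) (W (a @ replicate k (Hig i) @ Z # b))"
    if "vw n a" "vw n b" for a b k
    using that
  proof (induction k arbitrary: a)
    case 0 then show ?case by (simp add: Aeq_refl)
  next
    case (Suc k a)
    have "W (a @ Z # replicate (Suc k) (Hig i) @ b) = W (a @ [Z, Hig i] @ (replicate k (Hig i) @ b))" by simp
    also have "\<dots> \<approx> sm (inverse r) (W (a @ [Hig i, Z] @ (replicate k (Hig i) @ b)))"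
      using Suc.prems i by (intro ZHi) auto
    also have "W (a @ [Hig i, Z] @ (replicate k (Hig i) @ b)) = W ((a @ [Hig i]) @ Z # replicate k (Hig i) @ b)"
      by simp
    also have "sm (inverse r) \<dots> \<approx> sm (inverse r) (sm (inverse r ^ k) (W ((a @ [Hig i]) @ replicate k (Hig i) @ Z # b)))"
      using Suc.prems i by (intro Aeq_sm Suc.IH) auto
    also have "\<dots> = sm (inverse r ^ Suc k) (W (a @ replicate (Suc k) (Hig i) @ Z # b))"
      by (simp add: sm_sm)
    finally show ?case .
  qed
  show ?thesis
  proof (cases "0 \<le> m")
    case True
    then show ?thesis using powH[OF ab, of "nat m"] by (simp add: hw_def power_int_def)
  next
    case False
    then show ?thesis using powHi[OF ab, of "nat (-m)"] by (simp add: hw_def power_int_def)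
  qed
qed

end


lemma zw_X: "0 \<le> k \<Longrightarrow> Xg i # zw i k = zw i (k + 1)"
  by (simp add: zw_def nat_add_distrib)
lemma zw_Y: "k < 0 \<Longrightarrow> zw i k = Yg i # zw i (k + 1)"
proof -
  assume k: "k < 0"
  have "nat (- k) = Suc (nat (- (k + 1)))" using k by arith
  then show ?thesis using k by (auto simp: zw_def)
qed
lemma zw_Y2: "k \<le> 0 \<Longrightarrow> Yg i # zw i k = zw i (k - 1)"
proof -
  assume k: "k \<le> 0"
  have "nat (- (k - 1)) = Suc (nat (- k))" using k by arith
  then show ?thesis using k by (auto simp: zw_def)
qed
lemma zw_X2: "0 < k \<Longrightarrow> zw i k = Xg i # zw i (k - 1)"
proof -
  assume k: "0 < k"
  have "nat k = Suc (nat (k - 1))" using k by arith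
  then show ?thesis using k by (auto simp: zw_def)
qed
lemma hw1: "hw i 1 = [Hg i]" by (simp add: hw_def)
lemma hwm1: "hw i (-1) = [Hig i]" by (simp add: hw_def)
lemma hwd: "hw i (int d) = replicate d (Hg i)" by (simp add: hw_def)

lemma sm_comb: "sm c (sm c' A - B) = sm (c * c') A + sm (- c) B"
  by (simp add: fun_eq_iff fapp algebra_simps)
lemma sm_comb2: "sm c (A - B) = sm c A + sm (- c) B"
  by (simp add: fun_eq_iff fapp algebra_simps)
lemma sm_one_term: "sm c A = sm c A + sm 0 A"
  by (simp add: fun_eq_iff fapp)

context GW
begin

lemma core_blk:
  assumes i: "i \<in> {1..n}" and gi: "gidx g = i" and ab: "vw n a" "vw n b"
  shows "\<exists>c1 m1 k1 c2 m2 k2. W (a @ g # blk i m k @ b) \<approx>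
           sm c1 (W (a @ blk i m1 k1 @ b)) + sm c2 (W (a @ blk i m2 k2 @ b))"
proof (cases g)
  case (Hg j)
  with gi have g: "g = Hg i" by simp
  have "W (a @ g # blk i m k @ b) = W (a @ hw i 1 @ hw i m @ (zw i k @ b))"
    by (simp add: g hw1 blk_def)
  also have "\<dots> \<approx> W (a @ hw i (1 + m) @ (zw i k @ b))"
    using i ab by (intro hh) auto
  also have "\<dots> = sm 1 (W (a @ blk i (1 + m) k @ b)) + sm 0 (W (a @ blk i (1 + m) k @ b))"
    by (simp add: blk_def)
  finally show ?thesis by blast
next
  case (Hig j)
  with gi have g: "g = Hig i" by simp
  have "W (a @ g # blk i m k @ b) = W (a @ hw i (-1) @ hw i m @ (zw i k @ b))"
    by (simp add: g hwm1 blk_def)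
  also have "\<dots> \<approx> W (a @ hw i (-1 + m) @ (zw i k @ b))"
    using i ab by (intro hh) auto
  also have "\<dots> = sm 1 (W (a @ blk i (-1 + m) k @ b)) + sm 0 (W (a @ blk i (-1 + m) k @ b))"
    by (simp add: blk_def)
  finally show ?thesis by blast
next
  case (Xg j)
  with gi have g: "g = Xg i" by simp
  have qi: "q i \<noteq> 0" using qnz i by blast
  have hyp: "W (a @ [Xg i, Hg i] @ b) \<approx> sm (q i) (W (a @ [Hg i, Xg i] @ b))"
    if "vw n a" "vw n b" for a b
    using ctxrel[OF rel3[OF i] that] by (simp add: ctx_simps)
  have s1: "W (a @ Xg i # hw i m @ (zw i k @ b)) \<approx> sm (q i powi m) (W (a @ hw i m @ Xg i # zw i k @ b))"
    using Zpast[OF i _ qi hyp] i ab by auto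
  show ?thesis
  proof (cases "0 \<le> k")
    case True
    have "W (a @ g # blk i m k @ b) \<approx> sm (q i powi m) (W (a @ hw i m @ Xg i # zw i k @ b))"
      using s1 by (simp add: g blk_def)
    also have "\<dots> = sm (q i powi m) (W (a @ blk i m (k + 1) @ b)) + sm 0 (W (a @ blk i m (k + 1) @ b))"
      using True by (simp add: blk_def zw_X[symmetric])
    finally show ?thesis by blast
  next
    case False
    have e1: "W (a @ hw i m @ Xg i # zw i k @ b) = W ((a @ hw i m) @ [Xg i, Yg i] @ (zw i (k + 1) @ b))"
      using False by (simp add: zw_Y)
    have "W ((a @ hw i m) @ [Xg i, Yg i] @ (zw i (k + 1) @ b)) \<approx>
          ctx (a @ hw i m) (zw i (k + 1) @ b) (sm (q i ^ d) (W (replicate d (Hg i))) - W [])"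
      using i ab by (intro ctxrel rel5) auto
    also have "\<dots> = sm (q i ^ d) (W (a @ hw i m @ hw i (int d) @ (zw i (k + 1) @ b))) -
                    W (a @ blk i m (k + 1) @ b)"
      by (simp add: ctx_simps hwd blk_def)
    also have "\<dots> \<approx> sm (q i ^ d) (W (a @ hw i (m + int d) @ (zw i (k + 1) @ b))) -
                    W (a @ blk i m (k + 1) @ b)"
      using i ab by (intro Aeq_diff Aeq_sm hh Aeq_refl) auto
    finally have s2': "W ((a @ hw i m) @ [Xg i, Yg i] @ (zw i (k + 1) @ b)) \<approx> sm (q i ^ d) (W (a @ hw i (m + int d) @ (zw i (k + 1) @ b))) -
                    W (a @ blk i m (k + 1) @ b)" .
    have s2: "W (a @ hw i m @ Xg i # zw i k @ b) \<approx>
        sm (q i ^ d) (W (a @ blk i (m + int d) (k + 1) @ b)) - W (a @ blk i m (k + 1) @ b)"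
      unfolding e1 using s2' by (simp add: blk_def)
    have "W (a @ g # blk i m k @ b) \<approx> sm (q i powi m) (W (a @ hw i m @ Xg i # zw i k @ b))"
      using s1 by (simp add: g blk_def)
    also have "\<dots> \<approx> sm (q i powi m) (sm (q i ^ d) (W (a @ blk i (m + int d) (k + 1) @ b)) - W (a @ blk i m (k + 1) @ b))"
      using s2 by (rule Aeq_sm)
    also have "\<dots> = sm (q i powi m * q i ^ d) (W (a @ blk i (m + int d) (k + 1) @ b)) + sm (- (q i powi m)) (W (a @ blk i m (k + 1) @ b))"
      by (rule sm_comb)
    finally show ?thesis by blast
  qed
next
  case (Yg j)
  with gi have g: "g = Yg i" by simp
  have qi: "inverse (q i) \<noteq> 0" using qnz i by simp
  have hyp: "W (a @ [Yg i, Hg i] @ b) \<approx> sm (inverse (q i)) (W (a @ [Hg i, Yg i] @ b))"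
    if "vw n a" "vw n b" for a b
    using ctxrel[OF rel4[OF i] that] by (simp add: ctx_simps)
  have s1: "W (a @ Yg i # hw i m @ (zw i k @ b)) \<approx> sm (inverse (q i) powi m) (W (a @ hw i m @ Yg i # zw i k @ b))"
    using Zpast[OF i _ qi hyp] i ab by auto
  show ?thesis
  proof (cases "k \<le> 0")
    case True
    have "W (a @ g # blk i m k @ b) \<approx> sm (inverse (q i) powi m) (W (a @ hw i m @ Yg i # zw i k @ b))"
      using s1 by (simp add: g blk_def)
    also have "\<dots> = sm (inverse (q i) powi m) (W (a @ blk i m (k - 1) @ b)) + sm 0 (W (a @ blk i m (k - 1) @ b))"
      using True by (simp add: blk_def zw_Y2[symmetric])
    finally show ?thesis by blast
  next
    case False
    have e1: "W (a @ hw i m @ Yg i # zw i k @ b) = W ((a @ hw i m) @ [Yg i, Xg i] @ (zw i (k - 1) @ b))"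
      using False by (simp add: zw_X2)
    have "W ((a @ hw i m) @ [Yg i, Xg i] @ (zw i (k - 1) @ b)) \<approx>
          ctx (a @ hw i m) (zw i (k - 1) @ b) (W (replicate d (Hg i)) - W [])"
      using i ab by (intro ctxrel rel6) auto
    also have "\<dots> = W (a @ hw i m @ hw i (int d) @ (zw i (k - 1) @ b)) -
                    W (a @ blk i m (k - 1) @ b)"
      by (simp add: ctx_simps hwd blk_def)
    also have "\<dots> \<approx> W (a @ hw i (m + int d) @ (zw i (k - 1) @ b)) -
                    W (a @ blk i m (k - 1) @ b)"
      using i ab by (intro Aeq_diff hh Aeq_refl) auto
    finally have s2': "W ((a @ hw i m) @ [Yg i, Xg i] @ (zw i (k - 1) @ b)) \<approx> W (a @ hw i (m + int d) @ (zw i (k - 1) @ b)) -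
                    W (a @ blk i m (k - 1) @ b)" .
    have s2: "W (a @ hw i m @ Yg i # zw i k @ b) \<approx>
        W (a @ blk i (m + int d) (k - 1) @ b) - W (a @ blk i m (k - 1) @ b)"
      unfolding e1 using s2' by (simp add: blk_def)
    have "W (a @ g # blk i m k @ b) \<approx> sm (inverse (q i) powi m) (W (a @ hw i m @ Yg i # zw i k @ b))"
      using s1 by (simp add: g blk_def)
    also have "\<dots> \<approx> sm (inverse (q i) powi m) (W (a @ blk i (m + int d) (k - 1) @ b) - W (a @ blk i m (k - 1) @ b))"
      using s2 by (rule Aeq_sm)
    also have "\<dots> = sm (inverse (q i) powi m) (W (a @ blk i (m + int d) (k - 1) @ b)) + sm (- (inverse (q i) powi m)) (W (a @ blk i m (k - 1) @ b))"
      by (rule sm_comb2)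
    finally show ?thesis by blast
  qed
qed

end


lemma ctx_sum: "ctx a b (sum F S) = (\<Sum>i\<in>S. ctx a b (F i))"
  by (simp add: ctx_def ncmul_sum_left ncmul_sum_right)

context GW
begin

definition beta :: "(nat \<Rightarrow> int) \<Rightarrow> (nat \<Rightarrow> int) \<Rightarrow> gen list" where
  "beta m k = concat (map (\<lambda>j. blk j (m j) (k j)) [1..<Suc n])"

definition Key :: "((nat \<Rightarrow> int) \<times> (nat \<Rightarrow> int)) set" where
  "Key = {\<kappa>. \<forall>j. j \<notin> {1..n} \<longrightarrow> fst \<kappa> j = 0 \<and> snd \<kappa> j = 0}"

definition Wb :: "(nat \<Rightarrow> int) \<times> (nat \<Rightarrow> int) \<Rightarrow> 'k ncp" where
  "Wb \<kappa> = W (beta (fst \<kappa>) (snd \<kappa>))"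

lemma vw_beta: "vw n (beta m k)"
  by (auto simp: beta_def)

lemma beta_split:
  assumes i: "i \<in> {1..n}"
  shows "beta m k = concat (map (\<lambda>j. blk j (m j) (k j)) [1..<i]) @ blk i (m i) (k i) @
                    concat (map (\<lambda>j. blk j (m j) (k j)) [Suc i..<Suc n])"
proof -
  have "[1..<Suc n] = [1..<i] @ [i..<Suc n]" using i upt_add_eq_append[of 1 i "Suc n - i"] by simp
  also have "[i..<Suc n] = i # [Suc i..<Suc n]" using i by (intro upt_conv_Cons) auto
  finally show ?thesis by (simp add: beta_def)
qed

lemma beta_upd:
  assumes i: "i \<in> {1..n}"
  shows "beta (m(i := a)) (k(i := b)) = concat (map (\<lambda>j. blk j (m j) (k j)) [1..<i]) @ blk i a b @
                    concat (map (\<lambda>j. blk j (m j) (k j)) [Suc i..<Suc n])"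
proof -
  have m1: "map (\<lambda>j. blk j ((m(i := a)) j) ((k(i := b)) j)) [1..<i] = map (\<lambda>j. blk j (m j) (k j)) [1..<i]"
    by (rule map_cong) auto
  have m2: "map (\<lambda>j. blk j ((m(i := a)) j) ((k(i := b)) j)) [Suc i..<Suc n] =
      map (\<lambda>j. blk j (m j) (k j)) [Suc i..<Suc n]"
    by (rule map_cong) auto
  show ?thesis unfolding beta_split[OF i, of "m(i := a)" "k(i := b)"] m1 m2 fun_upd_same by (rule refl)
qed

lemma core_full:
  assumes gi: "gidx g \<in> {1..n}"
  shows "\<exists>c1 m1 k1 c2 m2 k2. W (g # beta m k) \<approx>
     sm c1 (W (beta (m(gidx g := m1)) (k(gidx g := k1)))) + sm c2 (W (beta (m(gidx g := m2)) (k(gidx g := k2))))"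
proof -
  define i where "i = gidx g"
  have i: "i \<in> {1..n}" using gi i_def by simp
  define pre where "pre = concat (map (\<lambda>j. blk j (m j) (k j)) [1..<i])"
  define post where "post = concat (map (\<lambda>j. blk j (m j) (k j)) [Suc i..<Suc n])"
  have vpre: "vw n pre" and vpost: "vw n post" using i by (auto simp: pre_def post_def)
  have lpre: "\<forall>g'\<in>set pre. gidx g' \<in> {1..n} \<and> gidx g' \<noteq> gidx g"
  proof
    fix g' assume "g' \<in> set pre"
    then obtain j where "j \<in> set [1..<i]" "g' \<in> set (blk j (m j) (k j))" by (auto simp: pre_def)
    then show "gidx g' \<in> {1..n} \<and> gidx g' \<noteq> gidx g" using gidx_blk i i_def by fastforce
  qed
  have "W (g # beta m k) = W ([] @ g # pre @ (blk i (m i) (k i) @ post))"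
    using beta_split[OF i] by (simp add: pre_def post_def)
  also have "\<dots> \<approx> W ([] @ pre @ g # (blk i (m i) (k i) @ post))"
    using gi vpre vpost i lpre by (intro commute1) auto
  also have "\<dots> = W (pre @ g # blk i (m i) (k i) @ post)" by simp
  finally have s1: "W (g # beta m k) \<approx> W (pre @ g # blk i (m i) (k i) @ post)" .
  obtain c1 m1 k1 c2 m2 k2 where s2: "W (pre @ g # blk i (m i) (k i) @ post) \<approx>
      sm c1 (W (pre @ blk i m1 k1 @ post)) + sm c2 (W (pre @ blk i m2 k2 @ post))"
    using core_blk[OF i _ vpre vpost, of g "m i" "k i"] i_def by blast
  have b1: "beta (m(i := m1)) (k(i := k1)) = pre @ blk i m1 k1 @ post"
    unfolding pre_def post_def by (rule beta_upd[OF i])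
  have b2: "beta (m(i := m2)) (k(i := k2)) = pre @ blk i m2 k2 @ post"
    unfolding pre_def post_def by (rule beta_upd[OF i])
  have "W (g # beta m k) \<approx>
     sm c1 (W (beta (m(i := m1)) (k(i := k1)))) + sm c2 (W (beta (m(i := m2)) (k(i := k2))))"
    unfolding b1 b2 by (rule Aeq_trans[OF s1 s2])
  then show ?thesis unfolding i_def by blast
qed

definition SP :: "'k ncp \<Rightarrow> bool" where
  "SP p \<longleftrightarrow> (\<exists>K c. finite K \<and> K \<subseteq> Key \<and> p \<approx> (\<Sum>\<kappa>\<in>K. sm (c \<kappa>) (Wb \<kappa>)))"

lemma sum_restrict_sm:
  assumes "finite A" "B \<subseteq> A"
  shows "(\<Sum>\<kappa>\<in>A. sm (if \<kappa> \<in> B then c \<kappa> else 0) (F \<kappa>)) = (\<Sum>\<kappa>\<in>B. sm (c \<kappa>) (F \<kappa>))"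
proof -
  have "(\<Sum>\<kappa>\<in>A. sm (if \<kappa> \<in> B then c \<kappa> else 0) (F \<kappa>)) = (\<Sum>\<kappa>\<in>B. sm (if \<kappa> \<in> B then c \<kappa> else 0) (F \<kappa>))"
    using assms by (intro sum.mono_neutral_right) auto
  also have "\<dots> = (\<Sum>\<kappa>\<in>B. sm (c \<kappa>) (F \<kappa>))" by (rule sum.cong) auto
  finally show ?thesis .
qed

lemma SP_Aeq: "p \<approx> p' \<Longrightarrow> SP p' \<Longrightarrow> SP p"
  unfolding SP_def by (meson Aeq_trans)

lemma SP_0: "SP 0"
  unfolding SP_def by (rule exI[of _ "{}"]) (simp add: Aeq_refl)

lemma SP_add: "SP p \<Longrightarrow> SP r \<Longrightarrow> SP (p + r)"
proof -
  assume "SP p" "SP r"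
  then obtain K1 c1 K2 c2 where k1: "finite K1" "K1 \<subseteq> Key" "p \<approx> (\<Sum>\<kappa>\<in>K1. sm (c1 \<kappa>) (Wb \<kappa>))"
    and k2: "finite K2" "K2 \<subseteq> Key" "r \<approx> (\<Sum>\<kappa>\<in>K2. sm (c2 \<kappa>) (Wb \<kappa>))"
    unfolding SP_def by blast
  define c where "c \<kappa> = (if \<kappa> \<in> K1 then c1 \<kappa> else 0) + (if \<kappa> \<in> K2 then c2 \<kappa> else 0)" for \<kappa>
  have "(\<Sum>\<kappa>\<in>K1 \<union> K2. sm (c \<kappa>) (Wb \<kappa>)) =
      (\<Sum>\<kappa>\<in>K1 \<union> K2. sm (if \<kappa> \<in> K1 then c1 \<kappa> else 0) (Wb \<kappa>)) + (\<Sum>\<kappa>\<in>K1 \<union> K2. sm (if \<kappa> \<in> K2 then c2 \<kappa> else 0) (Wb \<kappa>))"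
    by (simp add: c_def sm_addc sum.distrib)
  also have "\<dots> = (\<Sum>\<kappa>\<in>K1. sm (c1 \<kappa>) (Wb \<kappa>)) + (\<Sum>\<kappa>\<in>K2. sm (c2 \<kappa>) (Wb \<kappa>))"
    using k1 k2 by (simp add: sum_restrict_sm)
  finally have "p + r \<approx> (\<Sum>\<kappa>\<in>K1 \<union> K2. sm (c \<kappa>) (Wb \<kappa>))"
    using Aeq_add[OF k1(3) k2(3)] by simp
  then show "SP (p + r)" unfolding SP_def using k1 k2 by (intro exI[of _ "K1 \<union> K2"] exI[of _ c]) simp
qed

lemma SP_sm: "SP p \<Longrightarrow> SP (sm a p)"
proof -
  assume "SP p"
  then obtain K c where k: "finite K" "K \<subseteq> Key" "p \<approx> (\<Sum>\<kappa>\<in>K. sm (c \<kappa>) (Wb \<kappa>))"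
    unfolding SP_def by blast
  have "sm a p \<approx> sm a (\<Sum>\<kappa>\<in>K. sm (c \<kappa>) (Wb \<kappa>))" using k(3) by (rule Aeq_sm)
  also have "\<dots> = (\<Sum>\<kappa>\<in>K. sm (a * c \<kappa>) (Wb \<kappa>))" by (simp add: sm_sum sm_sm)
  finally have "sm a p \<approx> (\<Sum>\<kappa>\<in>K. sm (a * c \<kappa>) (Wb \<kappa>))" .
  then show ?thesis unfolding SP_def using k by (intro exI[of _ K] exI[of _ "\<lambda>\<kappa>. a * c \<kappa>"]) simp
qed

lemma SP_sum: "(\<And>i. i \<in> S \<Longrightarrow> SP (F i)) \<Longrightarrow> SP (sum F S)"
proof (induction S rule: infinite_finite_induct)
  case (insert x A)
  have "SP (F x)" "SP (sum F A)" using insert by auto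
  then show ?case by (simp only: sum.insert[OF insert(1,2)]) (rule SP_add)
qed (simp_all only: sum.infinite sum.empty SP_0 not_False_eq_True)

lemma SP_Wb: "\<kappa> \<in> Key \<Longrightarrow> SP (Wb \<kappa>)"
  unfolding SP_def by (intro exI[of _ "{\<kappa>}"] exI[of _ "\<lambda>_. 1"]) (simp add: Aeq_refl)

lemma Key_upd: "(m, k) \<in> Key \<Longrightarrow> i \<in> {1..n} \<Longrightarrow> (m(i := a), k(i := b)) \<in> Key"
  by (auto simp: Key_def)

lemma beta_zero: "beta (\<lambda>_. 0) (\<lambda>_. 0) = []"
  by (simp add: beta_def blk_def hw_def zw_def)

lemma SP_W: "vw n w \<Longrightarrow> SP (W w)"
proof (induction w)
  case Nil
  have "W [] = Wb ((\<lambda>_. 0), (\<lambda>_. 0))" by (simp add: Wb_def beta_zero)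
  moreover have "((\<lambda>_. 0), (\<lambda>_. 0)) \<in> Key" by (simp add: Key_def)
  ultimately show ?case by (simp add: SP_Wb)
next
  case (Cons g w)
  then obtain K c where k: "finite K" "K \<subseteq> Key" "W w \<approx> (\<Sum>\<kappa>\<in>K. sm (c \<kappa>) (Wb \<kappa>))"
    unfolding SP_def by auto
  have g: "gidx g \<in> {1..n}" using Cons by simp
  have "W (g # w) = ctx [g] [] (W w)" by (simp add: ctx_W)
  also have "\<dots> \<approx> ctx [g] [] (\<Sum>\<kappa>\<in>K. sm (c \<kappa>) (Wb \<kappa>))" using k(3) g by (intro lift) auto
  also have "\<dots> = (\<Sum>\<kappa>\<in>K. sm (c \<kappa>) (W (g # beta (fst \<kappa>) (snd \<kappa>))))"
    by (simp add: ctx_sum ctx_sm Wb_def ctx_W)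
  finally have e: "W (g # w) \<approx> (\<Sum>\<kappa>\<in>K. sm (c \<kappa>) (W (g # beta (fst \<kappa>) (snd \<kappa>))))" .
  have "SP (W (g # beta (fst \<kappa>) (snd \<kappa>)))" if "\<kappa> \<in> K" for \<kappa>
  proof -
    obtain m k where mk: "\<kappa> = (m, k)" by force
    have key: "(m, k) \<in> Key" using that k(2) mk by auto
    obtain c1 m1 k1 c2 m2 k2 where e2: "W (g # beta m k) \<approx>
       sm c1 (W (beta (m(gidx g := m1)) (k(gidx g := k1)))) + sm c2 (W (beta (m(gidx g := m2)) (k(gidx g := k2))))"
      using core_full[OF g] by blast
    have "SP (sm c1 (W (beta (m(gidx g := m1)) (k(gidx g := k1)))) + sm c2 (W (beta (m(gidx g := m2)) (k(gidx g := k2)))))"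
      using SP_Wb[OF Key_upd[OF key g, of m1 k1]] SP_Wb[OF Key_upd[OF key g, of m2 k2]]
      by (intro SP_add SP_sm) (simp_all add: Wb_def)
    then show ?thesis using SP_Aeq[OF e2] mk by simp
  qed
  then have "SP (\<Sum>\<kappa>\<in>K. sm (c \<kappa>) (W (g # beta (fst \<kappa>) (snd \<kappa>))))"
    by (intro SP_sum SP_sm)
  then show ?case using SP_Aeq[OF e] by simp
qed

lemma SP_elem: "ncelem n p \<Longrightarrow> SP p"
proof -
  assume p: "ncelem n p"
  then have "p = (\<Sum>u\<in>supp p. sm (p u) (W u))" using expand ncelem_fin by blast
  moreover have "SP (\<Sum>u\<in>supp p. sm (p u) (W u))"
    using p by (intro SP_sum SP_sm SP_W) (auto simp: ncelem_iff)
  ultimately show ?thesis by simp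
qed

lemma spanning:
  assumes "ncelem n p"
  shows "\<exists>K c. finite K \<and> K \<subseteq> Key \<and> (\<forall>\<kappa>\<in>K. c \<kappa> \<noteq> 0) \<and> p \<approx> (\<Sum>\<kappa>\<in>K. sm (c \<kappa>) (Wb \<kappa>))"
proof -
  obtain K c where k: "finite K" "K \<subseteq> Key" "p \<approx> (\<Sum>\<kappa>\<in>K. sm (c \<kappa>) (Wb \<kappa>))"
    using SP_elem[OF assms] unfolding SP_def by blast
  define K' where "K' = {\<kappa>\<in>K. c \<kappa> \<noteq> 0}"
  have "(\<Sum>\<kappa>\<in>K. sm (c \<kappa>) (Wb \<kappa>)) = (\<Sum>\<kappa>\<in>K'. sm (c \<kappa>) (Wb \<kappa>))"
    using k(1) by (intro sum.mono_neutral_right) (auto simp: K'_def)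
  then show ?thesis using k by (intro exI[of _ K'] exI[of _ c]) (auto simp: K'_def)
qed

end


type_synonym 'k tel = "(nat \<Rightarrow> int) \<Rightarrow> 'k"

definition td :: "(nat \<Rightarrow> int) \<Rightarrow> 'k::field tel" where
  "td p = (\<lambda>s. if s = p then 1 else 0)"

lemma supp_td: "supp (td p :: 'k::field tel) = {p}"
  by (auto simp: supp_def td_def)

lemma expandT: "finite (supp f) \<Longrightarrow> f = (\<Sum>s\<in>supp f. sm (f s) (td s))"
proof (rule ext)
  fix r assume fin: "finite (supp f)"
  have "(\<Sum>s\<in>supp f. sm (f s) (td s)) r = (\<Sum>s\<in>supp f. if r = s then f s else 0)"
    unfolding sum_fun_apply by (rule sum.cong) (auto simp: td_def fapp)
  also have "\<dots> = f r" using fin by (simp add: sum.delta supp_def)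
  finally show "f r = (\<Sum>s\<in>supp f. sm (f s) (td s)) r" by simp
qed

lemma supp_add_sub: "supp (f + g :: 'a \<Rightarrow> 'k::field) \<subseteq> supp f \<union> supp g"
  by (auto simp: supp_def fapp)
lemma supp_diff_sub: "supp (f - g :: 'a \<Rightarrow> 'k::field) \<subseteq> supp f \<union> supp g"
  by (auto simp: supp_def fapp)
lemma supp_sm_sub: "supp (sm c f :: 'a \<Rightarrow> 'k::field) \<subseteq> supp f"
  by (auto simp: supp_def fapp)
lemma supp_sum_sub: "supp (sum F S :: 'a \<Rightarrow> 'k::field) \<subseteq> (\<Union>i\<in>S. supp (F i))"
  by (auto simp: supp_def sum_fun_apply intro: ccontr dest: sum.neutral)
lemma fin_supp_sum: "finite S \<Longrightarrow> (\<And>i. i \<in> S \<Longrightarrow> finite (supp (F i))) \<Longrightarrow> finite (supp (sum F S :: 'a \<Rightarrow> 'k::field))"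
  by (rule finite_subset[OF supp_sum_sub]) auto
lemma fin_supp_add: "finite (supp f) \<Longrightarrow> finite (supp g) \<Longrightarrow> finite (supp (f + g :: 'a \<Rightarrow> 'k::field))"
  by (rule finite_subset[OF supp_add_sub]) auto
lemma fin_supp_diff: "finite (supp f) \<Longrightarrow> finite (supp g) \<Longrightarrow> finite (supp (f - g :: 'a \<Rightarrow> 'k::field))"
  by (rule finite_subset[OF supp_diff_sub]) auto
lemma fin_supp_sm: "finite (supp f) \<Longrightarrow> finite (supp (sm c f :: 'a \<Rightarrow> 'k::field))"
  by (rule finite_subset[OF supp_sm_sub]) auto

lemma fin_supp_sum': "(\<And>i. finite (supp (F i))) \<Longrightarrow> finite (supp (sum F S :: 'a \<Rightarrow> 'k::field))"
proof (cases "finite S")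
  case True
  assume "\<And>i. finite (supp (F i))"
  then show ?thesis using True by (intro fin_supp_sum) auto
next
  case False then show ?thesis by (simp add: supp_def fapp)
qed
lemma fin_supp_td: "finite (supp (td p :: 'k::field tel))"
  by (simp add: supp_td)

definition vec :: "int \<Rightarrow> int \<Rightarrow> nat \<Rightarrow> (nat \<Rightarrow> int)" where
  "vec a b i = (\<lambda>j. if j = 2 * i then a else if j = 2 * i + 1 then b else 0)"

lemma vec_even: "vec a b i (2 * l) = (if l = i then a else 0)"
  by (auto simp: vec_def)
lemma vec_odd: "vec a b i (Suc (2 * l)) = (if l = i then b else 0)"
  by (auto simp: vec_def)
lemma vec_add: "vec a b i + vec a' b' i = vec (a + a') (b + b') i"
  by (auto simp: vec_def fun_eq_iff fapp)
lemma vec_00: "vec 0 0 i = 0"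
  by (auto simp: vec_def fun_eq_iff fapp)

context GW
begin

definition cc :: "(nat \<Rightarrow> int) \<Rightarrow> (nat \<Rightarrow> int) \<Rightarrow> 'k" where
  "cc s t = (\<Prod>l\<in>{1..n}. q l powi (t (2 * l) * s (2 * l + 1)))"

lemma cc_add_left: "cc (s + s') t = cc s t * cc s' t"
  unfolding cc_def
  by (subst prod.distrib[symmetric], rule prod.cong)
     (auto simp: fapp distrib_left power_int_add qnz)

lemma cc_add_right: "cc s (t + t') = cc s t * cc s t'"
  unfolding cc_def
  by (subst prod.distrib[symmetric], rule prod.cong)
     (auto simp: fapp distrib_right power_int_add qnz)

lemma cc_nz: "cc s t \<noteq> 0"
  unfolding cc_def using qnz by (auto simp: power_int_eq_0_iff)

lemma cc_0: "cc 0 t = 1" "cc s 0 = 1"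
  unfolding cc_def by (auto simp: fapp)

lemma cc_vec: "cc (vec a b i) (vec a' b' j) = (if i = j \<and> i \<in> {1..n} then q i powi (a' * b) else 1)"
proof -
  have "cc (vec a b i) (vec a' b' j) = (\<Prod>l\<in>{1..n}. if l = i then (if i = j then q i powi (a' * b) else 1) else 1)"
    unfolding cc_def by (rule prod.cong) (auto simp: vec_even vec_odd)
  also have "\<dots> = (if i = j \<and> i \<in> {1..n} then q i powi (a' * b) else 1)"
    by (simp add: prod.delta)
  finally show ?thesis .
qed

definition tm :: "'k tel \<Rightarrow> 'k tel \<Rightarrow> 'k tel" where
  "tm f g = (\<lambda>r. \<Sum>s\<in>supp f. f s * g (r - s) * cc s (r - s))"

lemma tm_superset:
  assumes "finite S" "supp f \<subseteq> S"
  shows "tm f g r = (\<Sum>s\<in>S. f s * g (r - s) * cc s (r - s))"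
  unfolding tm_def using assms by (intro sum.mono_neutral_left) (auto simp: supp_def)

lemma tm_add_left:
  assumes "finite (supp f)" "finite (supp f')"
  shows "tm (f + f') g = tm f g + tm f' g"
proof (rule ext)
  fix r
  let ?S = "supp f \<union> supp f'"
  have "tm (f + f') g r = (\<Sum>s\<in>?S. (f + f') s * g (r - s) * cc s (r - s))"
    using assms supp_add_sub[of f f'] by (intro tm_superset) auto
  also have "\<dots> = (\<Sum>s\<in>?S. f s * g (r - s) * cc s (r - s)) + (\<Sum>s\<in>?S. f' s * g (r - s) * cc s (r - s))"
    by (simp add: fapp sum.distrib algebra_simps)
  also have "\<dots> = tm f g r + tm f' g r"
    using assms tm_superset[of ?S f g r] tm_superset[of ?S f' g r] by auto
  finally show "tm (f + f') g r = (tm f g + tm f' g) r" by (simp add: fapp)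
qed

lemma tm_sm_left: "tm (sm c f) g = sm c (tm f g)"
proof (rule ext)
  fix r
  show "tm (sm c f) g r = sm c (tm f g) r"
  proof (cases "c = 0")
    case True then show ?thesis by (simp add: tm_def fapp supp_def)
  next
    case False
    then have "supp (sm c f) = supp f" by (auto simp: supp_def fapp)
    then show ?thesis by (simp add: tm_def fapp sum_distrib_left algebra_simps)
  qed
qed

lemma tm_add_right: "tm f (g + g') = tm f g + tm f g'"
  by (simp add: tm_def fun_eq_iff fapp sum.distrib algebra_simps)
lemma tm_sm_right: "tm f (sm c g) = sm c (tm f g)"
  by (simp add: tm_def fun_eq_iff fapp sum_distrib_left algebra_simps)
lemma tm_diff_right: "tm f (g - g') = tm f g - tm f g'"
  by (simp add: tm_def fun_eq_iff fapp sum_subtractf algebra_simps)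
lemma tm_0: "tm 0 g = 0" "tm f 0 = 0"
  by (simp_all add: tm_def fun_eq_iff fapp supp_def)

lemma tm_sum_left:
  "(\<And>i. i \<in> S \<Longrightarrow> finite (supp (F i))) \<Longrightarrow> tm (sum F S) g = (\<Sum>i\<in>S. tm (F i) g)"
proof (induction S rule: infinite_finite_induct)
  case (insert x A)
  have f: "finite (supp (F x))" "finite (supp (sum F A))"
    using insert by (auto intro!: fin_supp_sum)
  have ih: "tm (sum F A) g = (\<Sum>i\<in>A. tm (F i) g)" using insert by auto
  show ?case by (simp only: sum.insert[OF insert(1,2)] tm_add_left[OF f] ih)
qed (simp_all only: sum.infinite sum.empty tm_0 not_False_eq_True)

lemma tm_sum_right: "tm f (sum G S) = (\<Sum>i\<in>S. tm f (G i))"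
proof (induction S rule: infinite_finite_induct)
  case (insert x A)
  show ?case by (simp only: sum.insert[OF insert(1,2)] tm_add_right insert)
qed (simp_all only: sum.infinite sum.empty tm_0 not_False_eq_True)

lemma tm_td_left: "tm (td p) g = (\<lambda>r. g (r - p) * cc p (r - p))"
  unfolding tm_def supp_td by (simp add: td_def)

lemma tm_td: "tm (td p) (td p') = sm (cc p p') (td (p + p'))"
proof (rule ext)
  fix r
  have "r - p = p' \<longleftrightarrow> r = p + p'" by (auto simp: algebra_simps)
  then show "tm (td p) (td p') r = sm (cc p p') (td (p + p')) r"
    unfolding tm_td_left by (auto simp: td_def fapp)
qed

lemma tm_td0_left: "tm (td 0) g = g"
  by (simp add: tm_td_left cc_0 fun_eq_iff)

lemma tm_td0_right:
  assumes "finite (supp f)"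
  shows "tm f (td 0) = f"
proof -
  have "tm f (td 0) = tm (\<Sum>s\<in>supp f. sm (f s) (td s)) (td 0)"
    by (rule arg_cong[where f="\<lambda>x. tm x (td 0)"], rule expandT[OF assms])
  also have "\<dots> = (\<Sum>s\<in>supp f. tm (sm (f s) (td s)) (td 0))"
    by (rule tm_sum_left) (intro fin_supp_sm fin_supp_td)
  also have "\<dots> = (\<Sum>s\<in>supp f. sm (f s) (td s))"
    by (rule sum.cong) (simp_all only: tm_sm_left tm_td cc_0 add_0_right sm_sm mult_1_right)
  also have "\<dots> = f" by (rule expandT[OF assms, symmetric])
  finally show ?thesis .
qed

lemma fin_tm:
  assumes "finite (supp f)" "finite (supp g)"
  shows "finite (supp (tm f g))"
proof -
  have "supp (tm f g) \<subseteq> (\<lambda>(s, t). s + t) ` (supp f \<times> supp g)"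
  proof
    fix r assume "r \<in> supp (tm f g)"
    then have "(\<Sum>s\<in>supp f. f s * g (r - s) * cc s (r - s)) \<noteq> 0"
      by (simp add: supp_def tm_def)
    from sum.not_neutral_contains_not_neutral[OF this] obtain s
      where "s \<in> supp f" "f s * g (r - s) * cc s (r - s) \<noteq> 0" by blast
    then have "s \<in> supp f" "r - s \<in> supp g" by (auto simp: supp_def)
    then show "r \<in> (\<lambda>(s, t). s + t) ` (supp f \<times> supp g)"
      by (intro image_eqI[of _ _ "(s, r - s)"]) (auto simp: algebra_simps)
  qed
  then show ?thesis using assms by (auto intro: finite_subset)
qed

lemma assoc_td2: "tm (tm (td u) (td v)) h = tm (td u) (tm (td v) h)"
proof (rule ext)
  fix r
  define w where "w = r - u - v"
  have e1: "r - (u + v) = w" "r - u - v = w" "r - u = v + w" by (simp_all add: w_def algebra_simps)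
  show "tm (tm (td u) (td v)) h r = tm (td u) (tm (td v) h) r"
    unfolding tm_td tm_sm_left
    by (simp add: tm_td_left fapp e1 cc_add_left cc_add_right mult_ac)
qed

lemma fin_tm_td: "finite (supp h) \<Longrightarrow> finite (supp (tm (td u) h))"
  by (intro fin_tm fin_supp_td)

lemma expand_tm_left:
  assumes "finite (supp f)"
  shows "tm f g = (\<Sum>u\<in>supp f. sm (f u) (tm (td u) g))"
proof -
  have "tm f g = tm (\<Sum>u\<in>supp f. sm (f u) (td u)) g"
    by (rule arg_cong[where f="\<lambda>x. tm x g"], rule expandT[OF assms])
  also have "\<dots> = (\<Sum>u\<in>supp f. sm (f u) (tm (td u) g))"
    by (subst tm_sum_left) (auto simp: tm_sm_left intro: fin_supp_sm fin_supp_td)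
  finally show ?thesis .
qed

lemma expand_tm_right:
  assumes "finite (supp g)"
  shows "tm f g = (\<Sum>v\<in>supp g. sm (g v) (tm f (td v)))"
proof -
  have "tm f g = tm f (\<Sum>v\<in>supp g. sm (g v) (td v))"
    by (rule arg_cong[where f="\<lambda>x. tm f x"], rule expandT[OF assms])
  also have "\<dots> = (\<Sum>v\<in>supp g. sm (g v) (tm f (td v)))"
    by (simp add: tm_sum_right tm_sm_right)
  finally show ?thesis .
qed

lemma assoc_td1:
  assumes g: "finite (supp g)" and h: "finite (supp h)"
  shows "tm (tm (td u) g) h = tm (td u) (tm g h)"
proof -
  have "tm (tm (td u) g) h = tm (\<Sum>v\<in>supp g. sm (g v) (tm (td u) (td v))) h"
    using expand_tm_right[OF g, of "td u"] by simp
  also have "\<dots> = (\<Sum>v\<in>supp g. sm (g v) (tm (tm (td u) (td v)) h))"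
    by (subst tm_sum_left) (auto simp: tm_sm_left intro!: fin_supp_sm fin_tm fin_supp_td)
  also have "\<dots> = (\<Sum>v\<in>supp g. sm (g v) (tm (td u) (tm (td v) h)))"
    by (simp add: assoc_td2)
  also have "\<dots> = tm (td u) (\<Sum>v\<in>supp g. sm (g v) (tm (td v) h))"
    by (simp add: tm_sum_right tm_sm_right)
  also have "\<dots> = tm (td u) (tm g h)"
    using expand_tm_left[OF g, of h] by simp
  finally show ?thesis .
qed

lemma tm_assoc:
  assumes f: "finite (supp f)" and g: "finite (supp g)" and h: "finite (supp h)"
  shows "tm (tm f g) h = tm f (tm g h)"
proof -
  have "tm (tm f g) h = tm (\<Sum>u\<in>supp f. sm (f u) (tm (td u) g)) h"
    using expand_tm_left[OF f, of g] by simp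
  also have "\<dots> = (\<Sum>u\<in>supp f. sm (f u) (tm (tm (td u) g) h))"
    using g by (subst tm_sum_left) (auto simp: tm_sm_left intro!: fin_supp_sm fin_tm fin_supp_td)
  also have "\<dots> = (\<Sum>u\<in>supp f. sm (f u) (tm (td u) (tm g h)))"
    using g h by (simp add: assoc_td1)
  also have "\<dots> = tm f (tm g h)"
    using expand_tm_left[OF f, of "tm g h"] by simp
  finally show ?thesis .
qed

end


lemma powi_1: "(x::'a::field) powi 1 = x" by (simp add: power_int_def)
lemma powi_m1: "(x::'a::field) powi (-1) = inverse x" by (simp add: power_int_def)

context GW
begin

fun gimg :: "gen \<Rightarrow> 'k tel" where
  "gimg (Hg i) = td (vec 1 0 i)"
| "gimg (Hig i) = td (vec (-1) 0 i)"
| "gimg (Xg i) = td (vec 0 1 i)"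
| "gimg (Yg i) = td (vec (int d) (-1) i) - td (vec 0 (-1) i)"

definition tau :: "gen list \<Rightarrow> 'k tel" where
  "tau w = foldr (\<lambda>g acc. tm (gimg g) acc) w (td 0)"

definition phi :: "'k ncp \<Rightarrow> 'k tel" where
  "phi p = (\<Sum>w\<in>supp p. sm (p w) (tau w))"

lemma fin_gimg: "finite (supp (gimg g))"
  by (cases g) (auto intro!: fin_supp_diff fin_supp_td)

lemma tau_Nil: "tau [] = td 0" by (simp add: tau_def)
lemma tau_Cons: "tau (g # w) = tm (gimg g) (tau w)" by (simp add: tau_def)

lemma fin_tau: "finite (supp (tau w))"
  by (induction w) (auto simp: tau_Nil tau_Cons fin_supp_td intro!: fin_tm fin_gimg)

lemma tau_append: "tau (u @ v) = tm (tau u) (tau v)"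
proof (induction u)
  case Nil then show ?case by (simp add: tau_Nil tm_td0_left)
next
  case (Cons g u)
  then show ?case by (simp add: tau_Cons tm_assoc fin_gimg fin_tau)
qed

lemma tau_single: "tau [g] = gimg g"
  by (simp add: tau_Cons tau_Nil tm_td0_right fin_gimg)

lemma tau_two: "tau [g, g'] = tm (gimg g) (gimg g')"
  by (simp add: tau_Cons tau_Nil tm_td0_right fin_gimg)

lemma phi_superset:
  assumes "finite S" "supp p \<subseteq> S"
  shows "phi p = (\<Sum>w\<in>S. sm (p w) (tau w))"
  unfolding phi_def using assms by (intro sum.mono_neutral_left) (auto simp: supp_def)

lemma phi_W: "phi (W u) = tau u"
  unfolding phi_def supp_W by (simp add: W_def)

lemma phi_0: "phi 0 = 0"
  by (simp add: phi_def supp_def fapp)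

lemma phi_add:
  assumes "finite (supp p)" "finite (supp r)"
  shows "phi (p + r) = phi p + phi r"
proof -
  let ?S = "supp p \<union> supp r"
  have "phi (p + r) = (\<Sum>w\<in>?S. sm ((p + r) w) (tau w))"
    using assms supp_add_sub[of p r] by (intro phi_superset) auto
  also have "\<dots> = (\<Sum>w\<in>?S. sm (p w) (tau w)) + (\<Sum>w\<in>?S. sm (r w) (tau w))"
    by (simp add: fapp sm_addc sum.distrib)
  also have "\<dots> = phi p + phi r"
    using assms phi_superset[of ?S p] phi_superset[of ?S r] by auto
  finally show ?thesis .
qed

lemma phi_sm: "phi (sm c p) = sm c (phi p)"
proof (cases "c = 0")
  case True then show ?thesis by (simp add: phi_0)
next
  case False
  then have "supp (sm c p) = supp p" by (auto simp: supp_def fapp)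
  then show ?thesis by (simp add: phi_def sm_sum sm_sm fapp)
qed

lemma phi_diff:
  assumes "finite (supp p)" "finite (supp r)"
  shows "phi (p - r) = phi p - phi r"
proof -
  have "phi (p - r) = phi (p + sm (-1) r)"
    by (rule arg_cong[where f=phi]) (simp add: fun_eq_iff fapp)
  also have "\<dots> = phi p + sm (-1) (phi r)"
    using assms by (simp add: phi_add phi_sm fin_supp_sm)
  finally have "phi (p - r) = phi p + sm (-1) (phi r)" .
  then show ?thesis by (simp add: fun_eq_iff fapp)
qed

lemma phi_sum:
  "(\<And>i. i \<in> S \<Longrightarrow> finite (supp (F i))) \<Longrightarrow> phi (sum F S) = (\<Sum>i\<in>S. phi (F i))"
proof (induction S rule: infinite_finite_induct)
  case (insert x A)
  have f: "finite (supp (F x))" "finite (supp (sum F A))"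
    using insert by (auto intro!: fin_supp_sum)
  have ih: "phi (sum F A) = (\<Sum>i\<in>A. phi (F i))" using insert by auto
  show ?case by (simp only: sum.insert[OF insert(1,2)] phi_add[OF f] ih)
qed (simp_all only: sum.infinite sum.empty phi_0 not_False_eq_True)

lemma phi_mul:
  assumes p: "finite (supp p)" and r: "finite (supp r)"
  shows "phi (ncmul p r) = tm (phi p) (phi r)"
proof -
  have fW: "finite (supp (W u :: 'k ncp))" for u by (simp add: supp_W)
  have "ncmul p r = ncmul (\<Sum>u\<in>supp p. sm (p u) (W u)) (\<Sum>v\<in>supp r. sm (r v) (W v))"
    using expand[OF p] expand[OF r] by (metis (no_types))
  also have "\<dots> = (\<Sum>u\<in>supp p. sm (p u) (ncmul (W u) (\<Sum>v\<in>supp r. sm (r v) (W v))))"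
    by (simp only: ncmul_sum_left ncmul_sm_left)
  also have "\<dots> = (\<Sum>u\<in>supp p. \<Sum>v\<in>supp r. sm (p u) (sm (r v) (W (u @ v))))"
    by (simp only: ncmul_sum_right ncmul_sm_right ncmul_W sm_sum)
  finally have e: "ncmul p r = (\<Sum>u\<in>supp p. \<Sum>v\<in>supp r. sm (p u) (sm (r v) (W (u @ v))))" .
  have "phi (ncmul p r) = (\<Sum>u\<in>supp p. \<Sum>v\<in>supp r. sm (p u) (sm (r v) (tau (u @ v))))"
    unfolding e by (simp add: phi_sum phi_sm phi_W fin_supp_sum' fin_supp_sm fW)
  also have "\<dots> = (\<Sum>u\<in>supp p. sm (p u) (\<Sum>v\<in>supp r. sm (r v) (tm (tau u) (tau v))))"
    by (simp only: sm_sum tau_append)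
  also have "\<dots> = (\<Sum>u\<in>supp p. sm (p u) (tm (tau u) (\<Sum>v\<in>supp r. sm (r v) (tau v))))"
    by (simp only: tm_sum_right tm_sm_right)
  also have "\<dots> = (\<Sum>u\<in>supp p. tm (sm (p u) (tau u)) (\<Sum>v\<in>supp r. sm (r v) (tau v)))"
    by (simp only: tm_sm_left)
  also have "\<dots> = tm (\<Sum>u\<in>supp p. sm (p u) (tau u)) (\<Sum>v\<in>supp r. sm (r v) (tau v))"
    by (rule tm_sum_left[symmetric]) (intro fin_supp_sm fin_tau)
  also have "\<dots> = tm (phi p) (phi r)" by (simp add: phi_def)
  finally show ?thesis .
qed

lemma tm_diff_left:
  assumes "finite (supp f)" "finite (supp f')"
  shows "tm (f - f') g = tm f g - tm f' g"
proof -
  have "tm (f - f') g = tm (f + sm (-1) f') g"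
    by (rule arg_cong[where f="\<lambda>x. tm x g"]) (simp add: fun_eq_iff fapp)
  also have "\<dots> = tm f g + sm (-1) (tm f' g)"
    using assms by (simp add: tm_add_left tm_sm_left fin_supp_sm)
  finally have "tm (f - f') g = tm f g + sm (-1) (tm f' g)" .
  then show ?thesis by (simp add: fun_eq_iff fapp)
qed

end


lemma ncpow_W1: "ncpow (W [g]) k = (W (replicate k g) :: 'k::field ncp)"
  using ncpow_smW[of 1 g k] by simp

lemma fin_supp_ncmul:
  assumes "finite (supp p)" "finite (supp r)"
  shows "finite (supp (ncmul p r :: 'k::field ncp))"
proof -
  have sub: "supp (ncmul p r) \<subseteq> (\<lambda>(u,v). u @ v) ` (supp p \<times> supp r)"
  proof
    fix w assume "w \<in> supp (ncmul p r)"
    then obtain k where "p (take k w) \<noteq> 0" "r (drop k w) \<noteq> 0"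
      using ncmul_nz unfolding supp_def by blast
    then show "w \<in> (\<lambda>(u,v). u @ v) ` (supp p \<times> supp r)"
      unfolding supp_def by (intro image_eqI[of _ _ "(take k w, drop k w)"]) auto
  qed
  show ?thesis using assms by (intro finite_subset[OF sub]) auto
qed

lemma supp_W_fin: "finite (supp (W u :: 'k::field ncp))" by (simp add: supp_W)

context GW
begin

context
  fixes i assumes i: "i \<in> {1..n}"
begin

lemma qi: "q i \<noteq> 0" using qnz i by blast

lemma tau_repH: "tau (replicate k (Hg i)) = td (vec (int k) 0 i)"
proof (induction k)
  case 0 then show ?case by (simp add: tau_Nil vec_00)
next
  case (Suc k)
  then show ?case using i by (simp add: tau_Cons tm_td cc_vec vec_add add.commute)
qed

lemma T1: "tm (gimg (Hg i)) (gimg (Hig i)) = td 0"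
  using i by (simp add: tm_td cc_vec vec_add vec_00)
lemma T2: "tm (gimg (Hig i)) (gimg (Hg i)) = td 0"
  using i by (simp add: tm_td cc_vec vec_add vec_00)
lemma T3: "tm (gimg (Xg i)) (gimg (Hg i)) = sm (q i) (tm (gimg (Hg i)) (gimg (Xg i)))"
  using i by (simp add: tm_td cc_vec vec_add powi_1 sm_sm)
lemma T4: "tm (gimg (Yg i)) (gimg (Hg i)) = sm (inverse (q i)) (tm (gimg (Hg i)) (gimg (Yg i)))"
  using i by (simp add: tm_td cc_vec vec_add powi_m1 sm_sm tm_diff_left tm_diff_right fin_supp_td
      sm_diff add.commute)
lemma T5: "tm (gimg (Xg i)) (gimg (Yg i)) = sm (q i ^ d) (tau (replicate d (Hg i))) - td 0"
  using i by (simp add: tm_td cc_vec vec_add tm_diff_right tau_repH vec_00 power_int_of_nat)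
lemma T6: "tm (gimg (Yg i)) (gimg (Xg i)) = tau (replicate d (Hg i)) - td 0"
  using i by (simp add: tm_td cc_vec vec_add tm_diff_left fin_supp_td tau_repH vec_00)

end

lemma T7:
  assumes "gidx g \<noteq> gidx g'"
  shows "tm (gimg g) (gimg g') = tm (gimg g') (gimg g)"
  using assms
  by (cases g; cases g') (simp_all add: tm_td cc_vec tm_diff_left tm_diff_right fin_supp_td
      fin_supp_diff add.commute)

lemma phi_rel: "r \<in> relators n d q \<Longrightarrow> phi r = 0"
  unfolding relators_def
proof (elim UnE UN_E)
  fix i assume i: "i \<in> {1..n}"
  assume "r \<in> {ncsub (ncmul (ncvar (Hg i)) (ncvar (Hig i))) ncone,
        ncsub (ncmul (ncvar (Hig i)) (ncvar (Hg i))) ncone,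
        ncsub (ncmul (ncvar (Xg i)) (ncvar (Hg i)))
              (ncsmul (q i) (ncmul (ncvar (Hg i)) (ncvar (Xg i)))),
        ncsub (ncmul (ncvar (Yg i)) (ncvar (Hg i)))
              (ncsmul (inverse (q i)) (ncmul (ncvar (Hg i)) (ncvar (Yg i)))),
        ncsub (ncmul (ncvar (Xg i)) (ncvar (Yg i)))
              (ncsub (ncpow (ncsmul (q i) (ncvar (Hg i))) d) ncone),
        ncsub (ncmul (ncvar (Yg i)) (ncvar (Xg i)))
              (ncsub (ncpow (ncvar (Hg i)) d) ncone) }"
  then show "phi r = 0"
    using T1[OF i] T2[OF i] T3[OF i] T4[OF i] T5[OF i] T6[OF i]
    by (auto simp: ncvar_eq ncone_eq ncmul_W ncsub_eq ncsmul_eq ncpow_smW ncpow_W1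
        phi_diff phi_sm phi_W supp_W_fin fin_supp_sm fin_supp_diff tau_two tau_Nil)
next
  assume "r \<in> {ncsub (ncmul (ncvar g) (ncvar g')) (ncmul (ncvar g') (ncvar g)) | g g' i j.
         i \<in> {1..n} \<and> j \<in> {1..n} \<and> i \<noteq> j \<and> g \<in> gens_of i \<and> g' \<in> gens_of j}"
  then obtain g g' where r: "r = ncsub (ncmul (ncvar g) (ncvar g')) (ncmul (ncvar g') (ncvar g))"
    and gg: "gidx g \<noteq> gidx g'"
    by (auto simp: gens_of_def)
  show "phi r = 0"
    using T7[OF gg]
    by (simp add: r ncvar_eq ncmul_W ncsub_eq phi_diff phi_W supp_W_fin tau_two)
qed

lemma phi_ideal: "p \<in> relideal n d q \<Longrightarrow> phi p = 0"
proof (induction rule: relideal.induct)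
  case zero then show ?case by (simp add: nczero_eq phi_0)
next
  case (gen a b r)
  have f: "finite (supp a)" "finite (supp b)" "finite (supp r)"
    using gen relator_ncelem ncelem_fin by blast+
  have "phi (ncmul (ncmul a r) b) = tm (tm (phi a) (phi r)) (phi b)"
    using f by (simp add: phi_mul fin_supp_ncmul)
  then show ?case using phi_rel[OF gen(3)] by (simp add: tm_0)
next
  case (add p r)
  then show ?case using ideal_fin[OF add(1)] ideal_fin[OF add(2)]
    by (simp add: ncadd_eq phi_add ncelem_fin)
qed

lemma phi_Aeq:
  assumes "p \<approx> r" "finite (supp p)" "finite (supp r)"
  shows "phi p = phi r"
proof -
  have "phi (p - r) = 0" using assms(1) by (simp add: Aeq_iff phi_ideal)
  then show ?thesis using assms(2,3) by (simp add: phi_diff)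
qed

end


lemma sum_single:
  assumes "finite S" "p \<in> S" "\<And>s. s \<in> S \<Longrightarrow> s \<noteq> p \<Longrightarrow> G s = 0"
  shows "(\<Sum>s\<in>S. G s) = (G p :: 'a::comm_monoid_add)"
proof -
  have "(\<Sum>s\<in>S. G s) = G p + (\<Sum>s\<in>S - {p}. G s)" using assms by (simp add: sum.remove)
  also have "(\<Sum>s\<in>S - {p}. G s) = 0" using assms by (intro sum.neutral) auto
  finally show ?thesis by simp
qed

definition LowAt :: "'k::field tel \<Rightarrow> (nat \<Rightarrow> int) \<Rightarrow> bool" where
  "LowAt f p \<longleftrightarrow> f p \<noteq> 0 \<and> (\<forall>r. f r \<noteq> 0 \<longrightarrow> (\<forall>j. p j \<le> r j) \<and> (\<forall>j. odd j \<longrightarrow> r j = p j))"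
definition HighAt :: "'k::field tel \<Rightarrow> (nat \<Rightarrow> int) \<Rightarrow> bool" where
  "HighAt f p \<longleftrightarrow> f p \<noteq> 0 \<and> (\<forall>r. f r \<noteq> 0 \<longrightarrow> (\<forall>j. r j \<le> p j) \<and> (\<forall>j. odd j \<longrightarrow> r j = p j))"

lemma LowAt_td: "LowAt (td p) p" by (simp add: LowAt_def td_def)
lemma HighAt_td: "HighAt (td p) p" by (simp add: HighAt_def td_def)

context GW
begin

lemma tm_nz:
  assumes "tm f g r \<noteq> 0"
  shows "\<exists>s. f s \<noteq> 0 \<and> g (r - s) \<noteq> 0"
proof -
  have "(\<Sum>s\<in>supp f. f s * g (r - s) * cc s (r - s)) \<noteq> 0" using assms by (simp add: tm_def)
  from sum.not_neutral_contains_not_neutral[OF this] obtain s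
    where "f s * g (r - s) * cc s (r - s) \<noteq> 0" by blast
  then show ?thesis by auto
qed

lemma tm_at:
  assumes "finite (supp f)" "f p \<noteq> 0" "\<And>s. f s \<noteq> 0 \<Longrightarrow> g (r - s) \<noteq> 0 \<Longrightarrow> s = p"
  shows "tm f g r = f p * g (r - p) * cc p (r - p)"
  unfolding tm_def
  by (rule sum_single) (use assms in \<open>auto simp: supp_def\<close>)

lemma LowAt_tm:
  assumes f: "LowAt f p" "finite (supp f)" and g: "LowAt g p'"
  shows "LowAt (tm f g) (p + p')"
proof -
  have "tm f g (p + p') = f p * g (p + p' - p) * cc p (p + p' - p)"
  proof (rule tm_at[OF f(2)])
    show "f p \<noteq> 0" using f by (simp add: LowAt_def)
    fix s assume s: "f s \<noteq> 0" "g (p + p' - s) \<noteq> 0"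
    have a: "p j \<le> s j" "p' j \<le> p j + p' j - s j" for j
      using s f g by (auto simp: LowAt_def fapp)
    have "s j = p j" for j using a(1)[of j] a(2)[of j] by linarith
    then show "s = p" by (intro ext)
  qed
  then have "tm f g (p + p') \<noteq> 0" using f g by (simp add: LowAt_def cc_nz)
  moreover have "(\<forall>j. (p + p') j \<le> r j) \<and> (\<forall>j. odd j \<longrightarrow> r j = (p + p') j)"
    if nz: "tm f g r \<noteq> 0" for r
  proof -
    obtain s where s: "f s \<noteq> 0" "g (r - s) \<noteq> 0" using tm_nz[OF nz] by blast
    have a: "p j \<le> s j" "odd j \<Longrightarrow> s j = p j" for j :: nat using s f by (auto simp: LowAt_def)
    have b: "p' j \<le> r j - s j" "odd j \<Longrightarrow> r j - s j = p' j" for j :: nat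
      using s g unfolding LowAt_def by (auto simp: fapp)
    show ?thesis unfolding fapp
    proof (intro conjI allI impI)
      fix j :: nat show "p j + p' j \<le> r j" using a(1)[of j] b(1)[of j] by linarith
    next
      fix j :: nat assume "odd j" then show "r j = p j + p' j" using a(2)[of j] b(2)[of j] by linarith
    qed
  qed
  ultimately show ?thesis by (simp add: LowAt_def)
qed

lemma HighAt_tm:
  assumes f: "HighAt f p" "finite (supp f)" and g: "HighAt g p'"
  shows "HighAt (tm f g) (p + p')"
proof -
  have "tm f g (p + p') = f p * g (p + p' - p) * cc p (p + p' - p)"
  proof (rule tm_at[OF f(2)])
    show "f p \<noteq> 0" using f by (simp add: HighAt_def)
    fix s assume s: "f s \<noteq> 0" "g (p + p' - s) \<noteq> 0"
    have a: "s j \<le> p j" "p j + p' j - s j \<le> p' j" for j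
      using s f g by (auto simp: HighAt_def fapp)
    have "s j = p j" for j using a(1)[of j] a(2)[of j] by linarith
    then show "s = p" by (intro ext)
  qed
  then have "tm f g (p + p') \<noteq> 0" using f g by (simp add: HighAt_def cc_nz)
  moreover have "(\<forall>j. r j \<le> (p + p') j) \<and> (\<forall>j. odd j \<longrightarrow> r j = (p + p') j)"
    if nz: "tm f g r \<noteq> 0" for r
  proof -
    obtain s where s: "f s \<noteq> 0" "g (r - s) \<noteq> 0" using tm_nz[OF nz] by blast
    have a: "s j \<le> p j" "odd j \<Longrightarrow> s j = p j" for j :: nat using s f by (auto simp: HighAt_def)
    have b: "r j - s j \<le> p' j" "odd j \<Longrightarrow> r j - s j = p' j" for j :: nat
      using s g unfolding HighAt_def by (auto simp: fapp)
    show ?thesis unfolding fapp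
    proof (intro conjI allI impI)
      fix j :: nat show "r j \<le> p j + p' j" using a(1)[of j] b(1)[of j] by linarith
    next
      fix j :: nat assume "odd j" then show "r j = p j + p' j" using a(2)[of j] b(2)[of j] by linarith
    qed
  qed
  ultimately show ?thesis by (simp add: HighAt_def)
qed

fun lowg :: "gen \<Rightarrow> nat \<Rightarrow> int" where
  "lowg (Hg i) = vec 1 0 i" | "lowg (Hig i) = vec (-1) 0 i"
| "lowg (Xg i) = vec 0 1 i" | "lowg (Yg i) = vec 0 (-1) i"
fun highg :: "gen \<Rightarrow> nat \<Rightarrow> int" where
  "highg (Hg i) = vec 1 0 i" | "highg (Hig i) = vec (-1) 0 i"
| "highg (Xg i) = vec 0 1 i" | "highg (Yg i) = vec (int d) (-1) i"

lemma vec_ne: "vec (int d) (-1) i \<noteq> vec 0 (-1) i"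
proof
  assume "vec (int d) (-1) i = vec 0 (-1) i"
  then have "vec (int d) (-1) i (2 * i) = vec 0 (-1) i (2 * i)" by simp
  then show False using dpos by (simp add: vec_even)
qed

lemma vec_le: "vec 0 (-1) i j \<le> vec (int d) (-1) i j"
  by (auto simp: vec_def)
lemma vec_odd_eq: "odd j \<Longrightarrow> vec (int d) (-1) i j = vec 0 (-1) i j"
  by (auto simp: vec_def)

lemma LowAt_gimg: "LowAt (gimg g) (lowg g)"
proof (cases g)
  case (Yg i)
  show ?thesis using vec_ne[of i] vec_le[of i] vec_odd_eq[of _ i]
    by (auto simp: Yg LowAt_def td_def fapp)
qed (auto simp: LowAt_td)

lemma HighAt_gimg: "HighAt (gimg g) (highg g)"
proof (cases g)
  case (Yg i)
  show ?thesis using vec_ne[of i] vec_le[of i] vec_odd_eq[of _ i]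
    by (auto simp: Yg HighAt_def td_def fapp)
qed (auto simp: HighAt_td)

definition lowv :: "gen list \<Rightarrow> nat \<Rightarrow> int" where "lowv w = sum_list (map lowg w)"
definition highv :: "gen list \<Rightarrow> nat \<Rightarrow> int" where "highv w = sum_list (map highg w)"

lemma LowAt_tau: "LowAt (tau w) (lowv w)"
proof (induction w)
  case Nil then show ?case by (simp add: tau_Nil lowv_def LowAt_td)
next
  case (Cons g w)
  then show ?case using LowAt_tm[OF LowAt_gimg fin_gimg Cons] by (simp add: tau_Cons lowv_def)
qed

lemma HighAt_tau: "HighAt (tau w) (highv w)"
proof (induction w)
  case Nil then show ?case by (simp add: tau_Nil highv_def HighAt_td)
next
  case (Cons g w)
  then show ?case using HighAt_tm[OF HighAt_gimg fin_gimg Cons] by (simp add: tau_Cons highv_def)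
qed

end


definition lexlt :: "(nat \<Rightarrow> int) \<Rightarrow> (nat \<Rightarrow> int) \<Rightarrow> bool" where
  "lexlt a b \<longleftrightarrow> (\<exists>i. a i < b i \<and> (\<forall>j<i. a j = b j))"
definition lexle :: "(nat \<Rightarrow> int) \<Rightarrow> (nat \<Rightarrow> int) \<Rightarrow> bool" where
  "lexle a b \<longleftrightarrow> a = b \<or> lexlt a b"

lemma lexlt_irrefl: "\<not> lexlt a a"
  by (auto simp: lexlt_def)

lemma lexlt_trans: "lexlt a b \<Longrightarrow> lexlt b c \<Longrightarrow> lexlt a c"
proof -
  assume "lexlt a b" "lexlt b c"
  then obtain i1 i2 where 1: "a i1 < b i1" "\<forall>j<i1. a j = b j" and 2: "b i2 < c i2" "\<forall>j<i2. b j = c j"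
    unfolding lexlt_def by blast
  show "lexlt a c" unfolding lexlt_def
  proof (cases i1 i2 rule: linorder_cases)
    case less then show "\<exists>i. a i < c i \<and> (\<forall>j<i. a j = c j)" using 1 2 by (intro exI[of _ i1]) auto
  next
    case equal then show "\<exists>i. a i < c i \<and> (\<forall>j<i. a j = c j)" using 1 2 by (intro exI[of _ i1]) auto
  next
    case greater then show "\<exists>i. a i < c i \<and> (\<forall>j<i. a j = c j)" using 1 2 by (intro exI[of _ i2]) auto
  qed
qed

lemma lexlt_total: "a \<noteq> b \<Longrightarrow> lexlt a b \<or> lexlt b a"
proof -
  assume "a \<noteq> b"
  then obtain i0 where "a i0 \<noteq> b i0" by auto
  define i where "i = (LEAST i. a i \<noteq> b i)"
  have ai: "a i \<noteq> b i" unfolding i_def by (rule LeastI[of _ i0]) fact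
  have lt: "\<forall>j<i. a j = b j" unfolding i_def using not_less_Least by blast
  show ?thesis
  proof (cases "a i < b i")
    case True then show ?thesis using lt unfolding lexlt_def by blast
  next
    case False then have "b i < a i" using ai by simp
    then show ?thesis using lt unfolding lexlt_def by (metis)
  qed
qed

lemma lexlt_add: "lexlt a b \<Longrightarrow> lexlt (a + c) (b + c)"
  by (auto simp: lexlt_def fapp)

lemma lexle_refl: "lexle a a" by (simp add: lexle_def)
lemma lexle_trans: "lexle a b \<Longrightarrow> lexle b c \<Longrightarrow> lexle a c"
  by (auto simp: lexle_def intro: lexlt_trans)
lemma lexle_antisym: "lexle a b \<Longrightarrow> lexle b a \<Longrightarrow> a = b"
  using lexlt_trans lexlt_irrefl by (auto simp: lexle_def)
lemma lexle_total: "lexle a b \<or> lexle b a"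
  using lexlt_total by (auto simp: lexle_def)
lemma lexle_lt_trans: "lexle a b \<Longrightarrow> lexlt b c \<Longrightarrow> lexlt a c"
  by (auto simp: lexle_def intro: lexlt_trans)
lemma lexlt_le_trans: "lexlt a b \<Longrightarrow> lexle b c \<Longrightarrow> lexlt a c"
  by (auto simp: lexle_def intro: lexlt_trans)
lemma lexle_add: "lexle a b \<Longrightarrow> lexle (a + c) (b + c)"
  by (auto simp: lexle_def intro: lexlt_add)
lemma lexle_add2: "lexle a b \<Longrightarrow> lexle c e \<Longrightarrow> lexle (a + c) (b + e)"
proof -
  assume "lexle a b" "lexle c e"
  then have "lexle (a + c) (b + c)" "lexle (c + b) (e + b)" by (auto intro: lexle_add)
  then show ?thesis by (simp add: add.commute lexle_trans)
qed
lemma lexlt_add2: "lexlt a b \<Longrightarrow> lexle c e \<Longrightarrow> lexlt (a + c) (b + e)"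
proof -
  assume "lexlt a b" "lexle c e"
  then have "lexlt (a + c) (b + c)" "lexle (c + b) (e + b)" by (auto intro: lexlt_add lexle_add)
  then show ?thesis by (simp add: add.commute lexlt_le_trans)
qed

lemma pw_lexle:
  assumes "\<And>j. a j \<le> b j"
  shows "lexle a b"
proof (cases "a = b")
  case True then show ?thesis by (simp add: lexle_def)
next
  case False
  then have "lexlt a b \<or> lexlt b a" by (rule lexlt_total)
  moreover have "\<not> lexlt b a" using assms unfolding lexlt_def by (auto simp: not_less)
  ultimately show ?thesis by (simp add: lexle_def)
qed

lemma ex_lexmin:
  assumes "finite K" "K \<noteq> {}"
  shows "\<exists>x\<in>K. \<forall>y\<in>K. lexle (L x) (L y)"
  using assms
proof (induction K rule: finite_ne_induct)
  case (singleton x) then show ?case by (simp add: lexle_refl)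
next
  case (insert x F)
  then obtain y where y: "y \<in> F" "\<forall>z\<in>F. lexle (L y) (L z)" by blast
  show ?case
  proof (cases "lexle (L x) (L y)")
    case True then show ?thesis using y by (auto intro: lexle_trans lexle_refl)
  next
    case False then have "lexle (L y) (L x)" using lexle_total by blast
    then show ?thesis using y by auto
  qed
qed

lemma ex_lexmax:
  assumes "finite K" "K \<noteq> {}"
  shows "\<exists>x\<in>K. \<forall>y\<in>K. lexle (L y) (L x)"
  using assms
proof (induction K rule: finite_ne_induct)
  case (singleton x) then show ?case by (simp add: lexle_refl)
next
  case (insert x F)
  then obtain y where y: "y \<in> F" "\<forall>z\<in>F. lexle (L z) (L y)" by blast
  show ?case
  proof (cases "lexle (L y) (L x)")
    case True then show ?thesis using y by (auto intro: lexle_trans lexle_refl)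
  next
    case False then have "lexle (L x) (L y)" using lexle_total by blast
    then show ?thesis using y by auto
  qed
qed

definition LexLow :: "'k::field tel \<Rightarrow> (nat \<Rightarrow> int) \<Rightarrow> bool" where
  "LexLow f p \<longleftrightarrow> f p \<noteq> 0 \<and> (\<forall>r. f r \<noteq> 0 \<longrightarrow> lexle p r)"
definition LexHigh :: "'k::field tel \<Rightarrow> (nat \<Rightarrow> int) \<Rightarrow> bool" where
  "LexHigh f p \<longleftrightarrow> f p \<noteq> 0 \<and> (\<forall>r. f r \<noteq> 0 \<longrightarrow> lexle r p)"

lemma LowAt_LexLow: "LowAt f p \<Longrightarrow> LexLow f p"
  by (auto simp: LowAt_def LexLow_def intro!: pw_lexle)
lemma HighAt_LexHigh: "HighAt f p \<Longrightarrow> LexHigh f p"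
  by (auto simp: HighAt_def LexHigh_def intro!: pw_lexle)

lemma LexLow_unique: "LexLow f p \<Longrightarrow> LexLow f p' \<Longrightarrow> p = p'"
  by (auto simp: LexLow_def intro: lexle_antisym)
lemma LexHigh_unique: "LexHigh f p \<Longrightarrow> LexHigh f p' \<Longrightarrow> p = p'"
  by (auto simp: LexHigh_def intro: lexle_antisym)
lemma LexLow_td: "LexLow (td p) p" by (simp add: LexLow_def td_def lexle_refl)
lemma LexHigh_td: "LexHigh (td p) p" by (simp add: LexHigh_def td_def lexle_refl)

lemma ex_LexLow: "finite (supp f) \<Longrightarrow> f \<noteq> 0 \<Longrightarrow> \<exists>p. LexLow f p"
proof -
  assume a: "finite (supp f)" "f \<noteq> 0"
  then have "supp f \<noteq> {}" by (auto simp: supp_def fun_eq_iff fapp)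
  then obtain p where "p \<in> supp f" "\<forall>r\<in>supp f. lexle p r" using ex_lexmin[OF a(1), of id] by auto
  then show ?thesis by (auto simp: LexLow_def supp_def)
qed
lemma ex_LexHigh: "finite (supp f) \<Longrightarrow> f \<noteq> 0 \<Longrightarrow> \<exists>p. LexHigh f p"
proof -
  assume a: "finite (supp f)" "f \<noteq> 0"
  then have "supp f \<noteq> {}" by (auto simp: supp_def fun_eq_iff fapp)
  then obtain p where "p \<in> supp f" "\<forall>r\<in>supp f. lexle r p" using ex_lexmax[OF a(1), of id] by auto
  then show ?thesis by (auto simp: LexHigh_def supp_def)
qed

lemma lowsum:
  assumes K: "finite K" "K \<noteq> {}" and inj: "inj_on L K" and c: "\<And>\<kappa>. \<kappa> \<in> K \<Longrightarrow> c \<kappa> \<noteq> 0"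
    and F: "\<And>\<kappa>. \<kappa> \<in> K \<Longrightarrow> LexLow (F \<kappa>) (L \<kappa>)"
  shows "\<exists>\<kappa>0\<in>K. (\<forall>\<kappa>\<in>K. lexle (L \<kappa>0) (L \<kappa>)) \<and> LexLow (\<Sum>\<kappa>\<in>K. sm (c \<kappa>) (F \<kappa>)) (L \<kappa>0)"
proof -
  obtain \<kappa>0 where k0: "\<kappa>0 \<in> K" "\<forall>\<kappa>\<in>K. lexle (L \<kappa>0) (L \<kappa>)" using ex_lexmin[OF K] by blast
  have "(\<Sum>\<kappa>\<in>K. sm (c \<kappa>) (F \<kappa>)) (L \<kappa>0) = (\<Sum>\<kappa>\<in>K. c \<kappa> * F \<kappa> (L \<kappa>0))"
    by (simp add: sum_fun_apply fapp)
  also have "\<dots> = c \<kappa>0 * F \<kappa>0 (L \<kappa>0)"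
  proof (rule sum_single[OF K(1) k0(1)])
    fix \<kappa> assume "\<kappa> \<in> K" "\<kappa> \<noteq> \<kappa>0"
    then have "F \<kappa> (L \<kappa>0) = 0"
      using F[of \<kappa>] k0 inj lexle_antisym unfolding LexLow_def inj_on_def by metis
    then show "c \<kappa> * F \<kappa> (L \<kappa>0) = 0" by simp
  qed
  finally have v: "(\<Sum>\<kappa>\<in>K. sm (c \<kappa>) (F \<kappa>)) (L \<kappa>0) \<noteq> 0"
    using c[OF k0(1)] F[OF k0(1)] by (simp add: LexLow_def)
  have "lexle (L \<kappa>0) r" if "(\<Sum>\<kappa>\<in>K. sm (c \<kappa>) (F \<kappa>)) r \<noteq> 0" for r
  proof -
    have "(\<Sum>\<kappa>\<in>K. c \<kappa> * F \<kappa> r) \<noteq> 0" using that by (simp add: sum_fun_apply fapp)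
    from sum.not_neutral_contains_not_neutral[OF this] obtain \<kappa> where "\<kappa> \<in> K" "F \<kappa> r \<noteq> 0" by auto
    then show ?thesis using F k0 unfolding LexLow_def by (meson lexle_trans)
  qed
  then show ?thesis using k0 v by (auto simp: LexLow_def)
qed

lemma highsum:
  assumes K: "finite K" "K \<noteq> {}" and inj: "inj_on L K" and c: "\<And>\<kappa>. \<kappa> \<in> K \<Longrightarrow> c \<kappa> \<noteq> 0"
    and F: "\<And>\<kappa>. \<kappa> \<in> K \<Longrightarrow> LexHigh (F \<kappa>) (L \<kappa>)"
  shows "\<exists>\<kappa>0\<in>K. (\<forall>\<kappa>\<in>K. lexle (L \<kappa>) (L \<kappa>0)) \<and> LexHigh (\<Sum>\<kappa>\<in>K. sm (c \<kappa>) (F \<kappa>)) (L \<kappa>0)"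
proof -
  obtain \<kappa>0 where k0: "\<kappa>0 \<in> K" "\<forall>\<kappa>\<in>K. lexle (L \<kappa>) (L \<kappa>0)" using ex_lexmax[OF K] by blast
  have "(\<Sum>\<kappa>\<in>K. sm (c \<kappa>) (F \<kappa>)) (L \<kappa>0) = (\<Sum>\<kappa>\<in>K. c \<kappa> * F \<kappa> (L \<kappa>0))"
    by (simp add: sum_fun_apply fapp)
  also have "\<dots> = c \<kappa>0 * F \<kappa>0 (L \<kappa>0)"
  proof (rule sum_single[OF K(1) k0(1)])
    fix \<kappa> assume "\<kappa> \<in> K" "\<kappa> \<noteq> \<kappa>0"
    then have "F \<kappa> (L \<kappa>0) = 0"
      using F[of \<kappa>] k0 inj lexle_antisym unfolding LexHigh_def inj_on_def by metis
    then show "c \<kappa> * F \<kappa> (L \<kappa>0) = 0" by simp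
  qed
  finally have v: "(\<Sum>\<kappa>\<in>K. sm (c \<kappa>) (F \<kappa>)) (L \<kappa>0) \<noteq> 0"
    using c[OF k0(1)] F[OF k0(1)] by (simp add: LexHigh_def)
  have "lexle r (L \<kappa>0)" if "(\<Sum>\<kappa>\<in>K. sm (c \<kappa>) (F \<kappa>)) r \<noteq> 0" for r
  proof -
    have "(\<Sum>\<kappa>\<in>K. c \<kappa> * F \<kappa> r) \<noteq> 0" using that by (simp add: sum_fun_apply fapp)
    from sum.not_neutral_contains_not_neutral[OF this] obtain \<kappa> where "\<kappa> \<in> K" "F \<kappa> r \<noteq> 0" by auto
    then show ?thesis using F k0 unfolding LexHigh_def by (meson lexle_trans)
  qed
  then show ?thesis using k0 v by (auto simp: LexHigh_def)
qed

context GW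
begin

lemma tm_LexLow:
  assumes f: "LexLow f p" "finite (supp f)" and g: "LexLow g p'"
  shows "LexLow (tm f g) (p + p')"
proof -
  have "tm f g (p + p') = f p * g (p + p' - p) * cc p (p + p' - p)"
  proof (rule tm_at[OF f(2)])
    show "f p \<noteq> 0" using f by (simp add: LexLow_def)
    fix s assume s: "f s \<noteq> 0" "g (p + p' - s) \<noteq> 0"
    have a: "lexle p s" "lexle p' (p + p' - s)" using s f g by (auto simp: LexLow_def)
    show "s = p"
    proof (rule ccontr)
      assume "s \<noteq> p"
      then have "lexlt p s" using a(1) by (simp add: lexle_def)
      from lexlt_add2[OF this a(2)] show False by (simp add: lexlt_irrefl)
    qed
  qed
  then have "tm f g (p + p') \<noteq> 0" using f g by (simp add: LexLow_def cc_nz)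
  moreover have "lexle (p + p') r" if nz: "tm f g r \<noteq> 0" for r
  proof -
    obtain s where s: "f s \<noteq> 0" "g (r - s) \<noteq> 0" using tm_nz[OF nz] by blast
    then have "lexle p s" "lexle p' (r - s)" using f g by (auto simp: LexLow_def)
    from lexle_add2[OF this] show ?thesis by simp
  qed
  ultimately show ?thesis by (simp add: LexLow_def)
qed

lemma tm_LexHigh:
  assumes f: "LexHigh f p" "finite (supp f)" and g: "LexHigh g p'"
  shows "LexHigh (tm f g) (p + p')"
proof -
  have "tm f g (p + p') = f p * g (p + p' - p) * cc p (p + p' - p)"
  proof (rule tm_at[OF f(2)])
    show "f p \<noteq> 0" using f by (simp add: LexHigh_def)
    fix s assume s: "f s \<noteq> 0" "g (p + p' - s) \<noteq> 0"
    have a: "lexle s p" "lexle (p + p' - s) p'" using s f g by (auto simp: LexHigh_def)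
    show "s = p"
    proof (rule ccontr)
      assume "s \<noteq> p"
      then have "lexlt s p" using a(1) by (simp add: lexle_def)
      from lexlt_add2[OF this a(2)] show False by (simp add: lexlt_irrefl)
    qed
  qed
  then have "tm f g (p + p') \<noteq> 0" using f g by (simp add: LexHigh_def cc_nz)
  moreover have "lexle r (p + p')" if nz: "tm f g r \<noteq> 0" for r
  proof -
    obtain s where s: "f s \<noteq> 0" "g (r - s) \<noteq> 0" using tm_nz[OF nz] by blast
    then have "lexle s p" "lexle (r - s) p'" using f g by (auto simp: LexHigh_def)
    from lexle_add2[OF this] show ?thesis by simp
  qed
  ultimately show ?thesis by (simp add: LexHigh_def)
qed

end


definition enc :: "(nat \<Rightarrow> int) \<Rightarrow> (nat \<Rightarrow> int) \<Rightarrow> nat \<Rightarrow> int" where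
  "enc m k = (\<lambda>j. if even j then m (j div 2) else k (j div 2))"

lemma enc_even: "enc m k (2 * j) = m j" by (simp add: enc_def)
lemma enc_odd: "enc m k (Suc (2 * j)) = k j" by (simp add: enc_def)

lemma enc_inj: "enc m k = enc m' k' \<Longrightarrow> m = m' \<and> k = k'"
proof -
  assume e: "enc m k = enc m' k'"
  have "m j = m' j" "k j = k' j" for j
    using fun_cong[OF e, of "2 * j"] fun_cong[OF e, of "Suc (2 * j)"] by (simp_all add: enc_even enc_odd)
  then show ?thesis by auto
qed

lemma sl_rep_vec: "sum_list (replicate c (vec a b j)) = vec (int c * a) (int c * b) j"
  by (induction c) (simp_all add: vec_00 vec_add algebra_simps)

lemma upt_set: "set [1..<Suc n] = {1..n}" by auto

context GW
begin

definition Dz :: "int \<Rightarrow> int" where "Dz b = (if b < 0 then int d * (- b) else 0)"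

lemma lowv_Nil: "lowv [] = 0" by (simp add: lowv_def)
lemma lowv_append: "lowv (u @ v) = lowv u + lowv v" by (simp add: lowv_def)
lemma highv_append: "highv (u @ v) = highv u + highv v" by (simp add: highv_def)

lemma lowv_hw: "lowv (hw j a) = vec a 0 j"
  by (auto simp: lowv_def hw_def sl_rep_vec)
lemma highv_hw: "highv (hw j a) = vec a 0 j"
  by (auto simp: highv_def hw_def sl_rep_vec)
lemma lowv_zw: "lowv (zw j b) = vec 0 b j"
  by (auto simp: lowv_def zw_def sl_rep_vec)
lemma highv_zw: "highv (zw j b) = vec (Dz b) b j"
  by (auto simp: highv_def zw_def sl_rep_vec Dz_def mult.commute)
lemma lowv_blk: "lowv (blk j a b) = vec a b j"
  by (simp add: blk_def lowv_append lowv_hw lowv_zw vec_add)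
lemma highv_blk: "highv (blk j a b) = vec (a + Dz b) b j"
  by (simp add: blk_def highv_append highv_hw highv_zw vec_add)

lemma lowv_concat: "lowv (concat xs) = sum_list (map lowv xs)"
  by (induction xs) (simp_all add: lowv_Nil lowv_append)
lemma highv_concat: "highv (concat xs) = sum_list (map highv xs)"
  by (induction xs) (simp_all add: highv_def)

lemma vecsum_enc:
  assumes "(m, k) \<in> Key"
  shows "(\<Sum>j\<in>{1..n}. vec (m j) (k j) j) = enc m k"
proof (rule ext)
  fix t
  have key: "j \<notin> {1..n} \<Longrightarrow> m j = 0 \<and> k j = 0" for j using assms by (auto simp: Key_def)
  show "(\<Sum>j\<in>{1..n}. vec (m j) (k j) j) t = enc m k t"
  proof (cases "even t")
    case True
    then obtain l where t: "t = 2 * l" by auto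
    have "(\<Sum>j\<in>{1..n}. vec (m j) (k j) j) t = (\<Sum>j\<in>{1..n}. if l = j then m j else 0)"
      unfolding sum_fun_apply t by (rule sum.cong) (auto simp: vec_even)
    also have "\<dots> = enc m k t" using key[of l] by (auto simp: t enc_even)
    finally show ?thesis .
  next
    case False
    then obtain l where t: "t = Suc (2 * l)" by (metis oddE add.commute plus_1_eq_Suc)
    have "(\<Sum>j\<in>{1..n}. vec (m j) (k j) j) t = (\<Sum>j\<in>{1..n}. if l = j then k j else 0)"
      unfolding sum_fun_apply t by (rule sum.cong) (auto simp: vec_odd)
    also have "\<dots> = enc m k t" using key[of l] by (auto simp: t enc_odd)
    finally show ?thesis .
  qed
qed

lemma lowv_beta: "(m, k) \<in> Key \<Longrightarrow> lowv (beta m k) = enc m k"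
proof -
  assume key: "(m, k) \<in> Key"
  have "lowv (beta m k) = sum_list (map (\<lambda>j. vec (m j) (k j) j) [1..<Suc n])"
    by (simp add: beta_def lowv_concat o_def lowv_blk)
  also have "\<dots> = (\<Sum>j\<in>{1..n}. vec (m j) (k j) j)"
    by (simp only: sum_set_upt_conv_sum_list_nat[symmetric] upt_set)
  finally show ?thesis using vecsum_enc[OF key] by simp
qed

lemma highv_beta: "(m, k) \<in> Key \<Longrightarrow> highv (beta m k) = enc (\<lambda>j. m j + Dz (k j)) k"
proof -
  assume key: "(m, k) \<in> Key"
  have key2: "((\<lambda>j. m j + Dz (k j)), k) \<in> Key" using key by (auto simp: Key_def Dz_def)
  have "highv (beta m k) = sum_list (map (\<lambda>j. vec (m j + Dz (k j)) (k j) j) [1..<Suc n])"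
    by (simp add: beta_def highv_concat o_def highv_blk)
  also have "\<dots> = (\<Sum>j\<in>{1..n}. vec (m j + Dz (k j)) (k j) j)"
    by (simp only: sum_set_upt_conv_sum_list_nat[symmetric] upt_set)
  finally show ?thesis using vecsum_enc[OF key2] by simp
qed

end


context GW
begin

lemma fin_phi: "finite (supp (phi p))"
  unfolding phi_def by (intro fin_supp_sum' fin_supp_sm fin_tau)

lemma td0_nz: "td 0 \<noteq> (0 :: 'k tel)"
proof
  assume "td 0 = (0 :: 'k tel)"
  then have "td 0 (0 :: nat \<Rightarrow> int) = (0 :: 'k)" by (simp add: fapp)
  then show False by (simp add: td_def)
qed

lemma struct:
  assumes u: "ncelem n u" and uv: "tm (phi u) (phi v) = td 0"
  shows "\<exists>m k c. (m, k) \<in> Key \<and> c \<noteq> 0 \<and> (\<forall>j. 0 \<le> k j) \<and> u \<approx> sm c (Wb (m, k)) \<and>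
           LexLow (phi u) (enc m k)"
proof -
  obtain K c where K: "finite K" "K \<subseteq> Key" and c: "\<forall>\<kappa>\<in>K. c \<kappa> \<noteq> 0"
    and uN: "u \<approx> (\<Sum>\<kappa>\<in>K. sm (c \<kappa>) (Wb \<kappa>))"
    using spanning[OF u] by blast
  define F where "F \<kappa> = tau (beta (fst \<kappa>) (snd \<kappa>))" for \<kappa>
  define L where "L \<kappa> = enc (fst \<kappa>) (snd \<kappa>)" for \<kappa>
  define H where "H \<kappa> = enc (\<lambda>j. fst \<kappa> j + Dz (snd \<kappa> j)) (snd \<kappa>)" for \<kappa>
  have fWb: "finite (supp (Wb \<kappa>))" for \<kappa> by (simp add: Wb_def supp_W)
  have finN: "finite (supp (\<Sum>\<kappa>\<in>K. sm (c \<kappa>) (Wb \<kappa>)))"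
    by (intro fin_supp_sum' fin_supp_sm fWb)
  have phiu: "phi u = (\<Sum>\<kappa>\<in>K. sm (c \<kappa>) (F \<kappa>))"
  proof -
    have "phi u = phi (\<Sum>\<kappa>\<in>K. sm (c \<kappa>) (Wb \<kappa>))"
      using phi_Aeq[OF uN ncelem_fin[OF u] finN] .
    also have "\<dots> = (\<Sum>\<kappa>\<in>K. sm (c \<kappa>) (F \<kappa>))"
      by (simp add: Wb_def phi_sum phi_sm phi_W fin_supp_sm supp_W_fin F_def)
    finally show ?thesis .
  qed
  have low: "LowAt (F \<kappa>) (L \<kappa>)" if "\<kappa> \<in> K" for \<kappa>
    using LowAt_tau[of "beta (fst \<kappa>) (snd \<kappa>)"] lowv_beta[of "fst \<kappa>" "snd \<kappa>"] that K(2)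
    by (auto simp: F_def L_def)
  have high: "HighAt (F \<kappa>) (H \<kappa>)" if "\<kappa> \<in> K" for \<kappa>
    using HighAt_tau[of "beta (fst \<kappa>) (snd \<kappa>)"] highv_beta[of "fst \<kappa>" "snd \<kappa>"] that K(2)
    by (auto simp: F_def H_def)
  have injL: "inj_on L K"
    unfolding inj_on_def L_def by (auto dest: enc_inj intro: prod_eqI)
  have injH: "inj_on H K"
  proof (rule inj_onI)
    fix x y assume "x \<in> K" "y \<in> K" "H x = H y"
    then have e: "(\<lambda>j. fst x j + Dz (snd x j)) = (\<lambda>j. fst y j + Dz (snd y j))" "snd x = snd y"
      unfolding H_def by (auto dest: enc_inj)
    have "fst x j = fst y j" for j using fun_cong[OF e(1), of j] e(2) by simp
    then show "x = y" using e(2) by (auto intro: prod_eqI)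
  qed
  have phiu_nz: "phi u \<noteq> 0"
  proof
    assume "phi u = 0" then have "tm (phi u) (phi v) = 0" by (simp add: tm_0)
    then show False using uv td0_nz by simp
  qed
  have Kne: "K \<noteq> {}" using phiu phiu_nz by auto
  have phiv_nz: "phi v \<noteq> 0"
  proof
    assume "phi v = 0" then have "tm (phi u) (phi v) = 0" by (simp add: tm_0)
    then show False using uv td0_nz by simp
  qed
  obtain a' where a': "LexLow (phi v) a'" using ex_LexLow[OF fin_phi phiv_nz] by blast
  obtain b' where b': "LexHigh (phi v) b'" using ex_LexHigh[OF fin_phi phiv_nz] by blast
  have lowL: "\<And>\<kappa>. \<kappa> \<in> K \<Longrightarrow> LexLow (F \<kappa>) (L \<kappa>)" using low LowAt_LexLow by blast
  have highH: "\<And>\<kappa>. \<kappa> \<in> K \<Longrightarrow> LexHigh (F \<kappa>) (H \<kappa>)" using high HighAt_LexHigh by blast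
  have cK: "\<And>\<kappa>. \<kappa> \<in> K \<Longrightarrow> c \<kappa> \<noteq> 0" using c by blast
  have "\<exists>\<kappa>0\<in>K. (\<forall>\<kappa>\<in>K. lexle (L \<kappa>0) (L \<kappa>)) \<and> LexLow (\<Sum>\<kappa>\<in>K. sm (c \<kappa>) (F \<kappa>)) (L \<kappa>0)"
    by (rule lowsum[OF K(1) Kne injL cK lowL])
  then obtain \<kappa>0 where k0: "\<kappa>0 \<in> K" "\<forall>\<kappa>\<in>K. lexle (L \<kappa>0) (L \<kappa>)" and lowu: "LexLow (phi u) (L \<kappa>0)"
    unfolding phiu by blast
  have "\<exists>\<kappa>0\<in>K. (\<forall>\<kappa>\<in>K. lexle (H \<kappa>) (H \<kappa>0)) \<and> LexHigh (\<Sum>\<kappa>\<in>K. sm (c \<kappa>) (F \<kappa>)) (H \<kappa>0)"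
    by (rule highsum[OF K(1) Kne injH cK highH])
  then obtain \<kappa>1 where k1: "\<kappa>1 \<in> K" and highu: "LexHigh (phi u) (H \<kappa>1)"
    unfolding phiu by blast
  have "LexLow (td 0 :: 'k tel) (L \<kappa>0 + a')" using tm_LexLow[OF lowu fin_phi a'] uv by simp
  then have s1: "L \<kappa>0 + a' = 0" using LexLow_unique LexLow_td by blast
  have "LexHigh (td 0 :: 'k tel) (H \<kappa>1 + b')" using tm_LexHigh[OF highu fin_phi b'] uv by simp
  then have s2: "H \<kappa>1 + b' = 0" using LexHigh_unique LexHigh_td by blast
  have le1: "lexle (L \<kappa>0) (H \<kappa>1)" using lowu highu by (simp add: LexLow_def LexHigh_def)
  have le2: "lexle a' b'" using a' b' by (simp add: LexLow_def LexHigh_def)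
  have eq1: "L \<kappa>0 = H \<kappa>1"
  proof (rule ccontr)
    assume "L \<kappa>0 \<noteq> H \<kappa>1"
    then have "lexlt (L \<kappa>0) (H \<kappa>1)" using le1 by (simp add: lexle_def)
    from lexlt_add2[OF this le2] show False using s1 s2 by (simp add: lexlt_irrefl)
  qed
  have "F \<kappa>1 (H \<kappa>1) \<noteq> 0" using high[OF k1] by (simp add: HighAt_def)
  then have "\<forall>j. L \<kappa>1 j \<le> H \<kappa>1 j" using low[OF k1] by (simp add: LowAt_def)
  then have "lexle (L \<kappa>1) (H \<kappa>1)" by (intro pw_lexle) auto
  moreover have "lexle (L \<kappa>0) (L \<kappa>1)" using k0 k1 by auto
  ultimately have "L \<kappa>1 = L \<kappa>0" using eq1 lexle_antisym by auto
  then have k10: "\<kappa>1 = \<kappa>0" using injL k0(1) k1 by (auto dest: inj_onD)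
  have HL: "H \<kappa>0 = L \<kappa>0" using eq1 k10 by simp
  have kpos: "0 \<le> snd \<kappa>0 j" for j
  proof -
    have "H \<kappa>0 (2 * j) = L \<kappa>0 (2 * j)" using HL by simp
    then have "Dz (snd \<kappa>0 j) = 0" by (simp add: H_def L_def enc_even)
    then show ?thesis using dpos by (auto simp: Dz_def split: if_splits)
  qed
  have single_u: "phi u r = 0" if "r \<noteq> L \<kappa>0" for r
  proof (rule ccontr)
    assume "phi u r \<noteq> 0"
    then have "lexle (L \<kappa>0) r" "lexle r (H \<kappa>1)" using lowu highu by (auto simp: LexLow_def LexHigh_def)
    then show False using that eq1 lexle_antisym by auto
  qed
  have single_F: "F \<kappa>0 r = 0" if "r \<noteq> L \<kappa>0" for r
  proof (rule ccontr)
    assume "F \<kappa>0 r \<noteq> 0"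
    then have "\<forall>j. L \<kappa>0 j \<le> r j" "\<forall>j. r j \<le> H \<kappa>0 j"
      using low[OF k0(1)] high[OF k0(1)] by (auto simp: LowAt_def HighAt_def)
    then have "r = L \<kappa>0" using HL by (intro ext) (metis antisym)
    then show False using that by simp
  qed
  have Ksing: "K = {\<kappa>0}"
  proof (rule ccontr)
    assume "K \<noteq> {\<kappa>0}"
    then have K'ne: "K - {\<kappa>0} \<noteq> {}" using k0(1) by auto
    have "\<exists>\<kappa>'\<in>K - {\<kappa>0}. (\<forall>\<kappa>\<in>K - {\<kappa>0}. lexle (L \<kappa>') (L \<kappa>)) \<and>
        LexLow (\<Sum>\<kappa>\<in>K - {\<kappa>0}. sm (c \<kappa>) (F \<kappa>)) (L \<kappa>')"
      by (rule lowsum) (use K(1) K'ne inj_on_subset[OF injL] cK lowL in auto)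
    then obtain \<kappa>' where k': "\<kappa>' \<in> K - {\<kappa>0}" and
      lw: "LexLow (\<Sum>\<kappa>\<in>K - {\<kappa>0}. sm (c \<kappa>) (F \<kappa>)) (L \<kappa>')" by blast
    have "phi u = sm (c \<kappa>0) (F \<kappa>0) + (\<Sum>\<kappa>\<in>K - {\<kappa>0}. sm (c \<kappa>) (F \<kappa>))"
      using phiu K(1) k0(1) by (simp add: sum.remove)
    then have "(\<Sum>\<kappa>\<in>K - {\<kappa>0}. sm (c \<kappa>) (F \<kappa>)) (L \<kappa>') = phi u (L \<kappa>') - c \<kappa>0 * F \<kappa>0 (L \<kappa>')"
      by (simp add: fapp)
    moreover have "L \<kappa>' \<noteq> L \<kappa>0" using k' k0(1) injL by (auto dest: inj_onD)
    ultimately have "(\<Sum>\<kappa>\<in>K - {\<kappa>0}. sm (c \<kappa>) (F \<kappa>)) (L \<kappa>') = 0"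
      using single_u single_F by simp
    then show False using lw by (simp add: LexLow_def)
  qed
  have "u \<approx> sm (c \<kappa>0) (Wb \<kappa>0)" using uN Ksing by simp
  moreover have "fst \<kappa>0 = fst \<kappa>0" ..
  ultimately show ?thesis
    using k0(1) K(2) c kpos lowu
    by (intro exI[of _ "fst \<kappa>0"] exI[of _ "snd \<kappa>0"] exI[of _ "c \<kappa>0"]) (auto simp: L_def)
qed

lemma hmono_W: "hmono m k = W (concat (map (\<lambda>j. hw j (m j)) [1..<Suc k]))"
proof (induction k)
  case 0 then show ?case by (simp add: ncone_eq)
next
  case (Suc k)
  have hp: "hpow i z = W (hw i z)" for i z
    by (simp add: hpow_def hw_def ncvar_eq ncpow_W1)
  show ?case using Suc by (simp add: hp ncmul_W)
qed

lemma beta_hmono: "W (beta m (\<lambda>_. 0)) = hmono m n"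
  by (simp add: hmono_W beta_def blk_def zw_def)

lemma main:
  assumes "Aunit n d q u"
  shows "\<exists>\<gamma>::'k. \<exists>m::nat \<Rightarrow> int. \<gamma> \<noteq> 0 \<and> Aeq n d q u (ncsmul \<gamma> (hmono m n))"
proof -
  obtain v where u: "ncelem n u" and v: "ncelem n v" and uv: "ncmul u v \<approx> ncone"
    and vu: "ncmul v u \<approx> ncone"
    using assms by (auto simp: Aunit_def)
  have p1: "tm (phi u) (phi v) = td 0"
  proof -
    have "phi (ncmul u v) = phi (W [])"
      using uv by (intro phi_Aeq) (auto simp: ncone_eq supp_W intro: fin_supp_ncmul ncelem_fin u v)
    then show ?thesis using u v by (simp add: phi_mul ncelem_fin phi_W tau_Nil)
  qed
  have p2: "tm (phi v) (phi u) = td 0"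
  proof -
    have "phi (ncmul v u) = phi (W [])"
      using vu by (intro phi_Aeq) (auto simp: ncone_eq supp_W intro: fin_supp_ncmul ncelem_fin u v)
    then show ?thesis using u v by (simp add: phi_mul ncelem_fin phi_W tau_Nil)
  qed
  obtain m k c where mk: "(m, k) \<in> Key" "c \<noteq> 0" "\<forall>j. 0 \<le> k j" "u \<approx> sm c (Wb (m, k))"
    "LexLow (phi u) (enc m k)"
    using struct[OF u p1] by blast
  obtain m' k' c' where mk': "\<forall>j. 0 \<le> k' j" "LexLow (phi v) (enc m' k')"
    using struct[OF v p2] by blast
  have "LexLow (td 0 :: 'k tel) (enc m k + enc m' k')" using tm_LexLow[OF mk(5) fin_phi mk'(2)] p1 by simp
  then have s: "enc m k + enc m' k' = 0" using LexLow_unique LexLow_td by blast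
  have "k j = 0" for j
  proof -
    have "(enc m k + enc m' k') (Suc (2 * j)) = 0" using s by (simp add: fapp)
    then have "k j + k' j = 0" by (simp add: fapp enc_odd)
    then show ?thesis using mk(3) mk'(1) by (metis add_nonneg_eq_0_iff)
  qed
  then have "k = (\<lambda>_. 0)" by auto
  then have "u \<approx> sm c (hmono m n)" using mk(4) by (simp add: Wb_def beta_hmono)
  then show ?thesis using mk(2) by (auto simp: ncsmul_eq)
qed

end

theorem lemma2p2:
  fixes n d :: nat and q :: "nat \<Rightarrow> 'k::field" and u :: "'k ncp"
  assumes "n > 0" and "d > 0"
    and "\<forall>i\<in>{1..n}. q i \<noteq> 0 \<and> q i ^ d \<noteq> 1"
    and "Aunit n d q u"
  shows "\<exists>\<gamma>::'k. \<exists>m::nat \<Rightarrow> int. \<gamma> \<noteq> 0 \<and> Aeq n d q u (ncsmul \<gamma> (hmono m n))"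
proof -
  interpret GW n d q using assms(2,3) by unfold_locales auto
  show ?thesis using main[OF assms(4)] .
qed


end
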